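(* Let $\mathcal X\subseteq\mathbb R^p$ and $\mathcal A=\{a^{(1)},\dots,a^{(d)}\}$ a finite set of real actions. Let $(\boldsymbol X_i,A_i,R_i)$, $i=1,\dots,n$, be random tuples such that: (i) the tuples are independent; (ii) $\boldsymbol X_1,\dots,\boldsymbol X_n$ are i.i.d.; (iii) conditionally on $\boldsymbol X_i$, $A_i$ has distribution $\widetilde\pi_i(\cdot\mid\boldsymbol X_i)$ with $\widetilde\pi_i(a\mid\boldsymbol x)>0$ for all $a,\boldsymbol x$; (iv) the conditional distribution of $R_i$ given $\boldsymbol X_i=\boldsymbol x,A_i=a$ does not depend on $i$; rewards have finite second moments. Let $\varrho(\boldsymbol x,a)=\mathbb E[R_i\mid\boldsymbol X_i=\boldsymbol x,A_i=a]$. Let $f_1,\dots,f_q:\mathbb R\to\mathbb R$, $\boldsymbol f(a)=(1,f_1(a),\dots,f_q(a))^\top$, and let $D\in\mathbb R^{d\times(q+1)}$ have $k$-th row $\boldsymbol f(a^{(k)})^\top$, assumed of full column rank. Assume the regression assumption: for every $\boldsymbol x$ there is $\boldsymbol\beta(\boldsymbol x)\in\mathbb R^{q+1}$ with $\varrho(\boldsymbol x,a)=\boldsymbol f(a)^\top\boldsymbol\beta(\boldsymbol x)$ for all $a\in\mathcal A$. Let $\Sigma_i(\boldsymbol X_i)$ be the conditional covariance matrix given $\boldsymbol X_i$ of the per-action IPS weights, with entries $\Sigma_{i,jk}(\boldsymbol X_i)=\operatorname{Cov}\big(R_i\mathbf 1_{\{A_i=a^{(j)}\}}/\widetilde\pi_i(a^{(j)}\mid\boldsymbol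 X_i),\,R_i\mathbf 1_{\{A_i=a^{(k)}\}}/\widetilde\pi_i(a^{(k)}\mid\boldsymbol X_i)\mid\boldsymbol X_i\big)$, assumed invertible, and take weight matrices $W_i(\boldsymbol X_i)=\Sigma_i(\boldsymbol X_i)^{-1}$ and kernel matrices $\mathbf K_i(\boldsymbol X_i)=W_i(\boldsymbol X_i)D\,(D^\top W_i(\boldsymbol X_i)D)^{-1}D^\top$. For a deterministic policy $\pi:\mathcal X\to\mathcal A$ define $$\widehat V_{\rm IPS}(\pi)=\frac1n\sum_{i=1}^nR_i\frac{\mathbf 1_{\{A_i=\pi(\boldsymbol X_i)\}}}{\widetilde\pi_i(A_i\mid\boldsymbol X_i)},\qquad \widehat V_{\rm K}(\pi)=\frac1n\sum_{i=1}^nR_i\frac{\langle\boldsymbol e_{A_i},\mathbf K_i(\boldsymbol X_i)\boldsymbol e_{\pi(\boldsymbol X_i)}\rangle}{\widetilde\pi_i(A_i\mid\boldsymbol X_i)}.$$ Then for every deterministic policy $\pi:\mathcal X\to\mathcal A$, $\operatorname{Var}(\widehat V_{\rm K}(\pi))\le\operatorname{Var}(\widehat V_{\rm IPS}(\pi))$.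
   Context: $\boldsymbol e_a\in\{0,1\}^d$ is the one-hot encoding of $a\in\mathcal A$ (entry $k$ equals $\mathbf 1_{\{a=a^{(k)}\}}$). Variances and covariances are taken under the data-generating law described (actions drawn from the logging policies $\widetilde\pi_i$). *)

theory Defs
  imports "HOL-Analysis.Analysis" "HOL-Probability.Probability"
begin

definition design :: "('d::finite \<Rightarrow> real) \<Rightarrow> (real \<Rightarrow> real^'m) \<Rightarrow> real^'m^'d" where
  "design act fv = (\<chi> k. fv (act k))"

definition ips_weight ::
  "(nat \<Rightarrow> 'd \<Rightarrow> 'x \<Rightarrow> real) \<Rightarrow> (nat \<Rightarrow> 'w \<Rightarrow> 'x) \<Rightarrow> (nat \<Rightarrow> 'w \<Rightarrow> 'd)
    \<Rightarrow> (nat \<Rightarrow> 'w \<Rightarrow> real) \<Rightarrow> nat \<Rightarrow> 'd \<Rightarrow> 'w \<Rightarrow> real" where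
  "ips_weight pit X A R i j \<omega> =
     R i \<omega> * (if A i \<omega> = j then 1 else 0) / pit i j (X i \<omega>)"

definition cond_cov_matrix ::
  "'w measure \<Rightarrow> 'x measure \<Rightarrow> (nat \<Rightarrow> 'd::finite \<Rightarrow> 'x \<Rightarrow> real) \<Rightarrow> (nat \<Rightarrow> 'w \<Rightarrow> 'x)
    \<Rightarrow> (nat \<Rightarrow> 'w \<Rightarrow> 'd) \<Rightarrow> (nat \<Rightarrow> 'w \<Rightarrow> real) \<Rightarrow> nat \<Rightarrow> 'w \<Rightarrow> real^'d^'d" where
  "cond_cov_matrix M Mx pit X A R i \<omega> =
     (let F = vimage_algebra (space M) (X i) Mx;
          Y = ips_weight pit X A R i
      in \<chi> j k. real_cond_exp M F (\<lambda>\<eta>. Y j \<eta> * Y k \<eta>) \<omega>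
                 - real_cond_exp M F (Y j) \<omega> * real_cond_exp M F (Y k) \<omega>)"

definition kernel_matrix :: "real^'d^'d \<Rightarrow> real^'m^'d \<Rightarrow> real^'d^'d" where
  "kernel_matrix Sig D =
     (let W = matrix_inv Sig
      in W ** D ** matrix_inv (transpose D ** W ** D) ** transpose D)"

definition V_IPS ::
  "nat \<Rightarrow> (nat \<Rightarrow> 'd \<Rightarrow> 'x \<Rightarrow> real) \<Rightarrow> (nat \<Rightarrow> 'w \<Rightarrow> 'x) \<Rightarrow> (nat \<Rightarrow> 'w \<Rightarrow> 'd)
    \<Rightarrow> (nat \<Rightarrow> 'w \<Rightarrow> real) \<Rightarrow> ('x \<Rightarrow> 'd) \<Rightarrow> 'w \<Rightarrow> real" where
  "V_IPS n pit X A R pol \<omega> =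
     (1 / real n) * (\<Sum>i = 1..n. R i \<omega> * (if A i \<omega> = pol (X i \<omega>) then 1 else 0)
                                   / pit i (A i \<omega>) (X i \<omega>))"

definition V_K ::
  "'w measure \<Rightarrow> 'x measure \<Rightarrow> nat \<Rightarrow> (nat \<Rightarrow> 'd::finite \<Rightarrow> 'x \<Rightarrow> real) \<Rightarrow> (nat \<Rightarrow> 'w \<Rightarrow> 'x)
    \<Rightarrow> (nat \<Rightarrow> 'w \<Rightarrow> 'd) \<Rightarrow> (nat \<Rightarrow> 'w \<Rightarrow> real) \<Rightarrow> real^'m^'d \<Rightarrow> ('x \<Rightarrow> 'd) \<Rightarrow> 'w \<Rightarrow> real" where
  "V_K M Mx n pit X A R D pol \<omega> =
     (1 / real n) * (\<Sum>i = 1..n. R i \<omega> *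
        (axis (A i \<omega>) (1::real) \<bullet>
           (kernel_matrix (cond_cov_matrix M Mx pit X A R i \<omega>) D *v axis (pol (X i \<omega>)) 1))
        / pit i (A i \<omega>) (X i \<omega>))"

end

theory Submission
  imports Defs
begin

lemma matrix_inv_both:
  fixes S :: "real^'n^'n"
  assumes "invertible S"
  shows "S ** matrix_inv S = mat 1" "matrix_inv S ** S = mat 1"
proof -
  have ex: "\<exists>A'. S ** A' = mat 1 \<and> A' ** S = mat 1" using assms unfolding invertible_def by blast
  show "S ** matrix_inv S = mat 1" "matrix_inv S ** S = mat 1"
    unfolding matrix_inv_def using someI_ex[OF ex] by auto
qed

lemma dot_transp: "(x::real^'n) \<bullet> ((A::real^'m^'n) *v y) = (transpose A *v x) \<bullet> y"
  by (simp add: transpose_matrix_vector dot_lmul_matrix)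

lemma matrix_inv_sym:
  fixes S :: "real^'n^'n"
  assumes "invertible S" "transpose S = S"
  shows "transpose (matrix_inv S) = matrix_inv S"
proof -
  let ?W = "matrix_inv S"
  have 1: "S ** ?W = mat 1" "?W ** S = mat 1" using matrix_inv_both[OF assms(1)] by auto
  have "transpose ?W ** S = mat 1"
    using arg_cong[OF 1(1), of transpose] assms(2) by (simp add: matrix_transpose_mul transpose_mat)
  then have "transpose ?W = transpose ?W ** (S ** ?W)" using 1 by simp
  also have "\<dots> = ?W" using \<open>transpose ?W ** S = mat 1\<close> by (simp add: matrix_mul_assoc)
  finally show ?thesis .
qed

lemma psd_cs:
  fixes S :: "real^'n^'n"
  assumes psd: "\<And>v. 0 \<le> v \<bullet> (S *v v)" and sym: "transpose S = S"
  shows "(x \<bullet> (S *v y))\<^sup>2 \<le> (x \<bullet> (S *v x)) * (y \<bullet> (S *v y))"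
proof -
  define a where "a = x \<bullet> (S *v x)"
  define b where "b = x \<bullet> (S *v y)"
  define c where "c = y \<bullet> (S *v y)"
  have yx: "y \<bullet> (S *v x) = b" unfolding b_def
    by (metis dot_transp inner_commute sym)
  have q: "0 \<le> a + 2 * t * b + t\<^sup>2 * c" for t
  proof -
    have "0 \<le> (x + t *\<^sub>R y) \<bullet> (S *v (x + t *\<^sub>R y))" by (rule psd)
    also have "\<dots> = a + 2 * t * b + t\<^sup>2 * c"
      unfolding a_def c_def b_def[symmetric]
      using yx
      by (simp add: matrix_vector_right_distrib inner_add_left inner_add_right
          matrix_vector_mult_scaleR power2_eq_square algebra_simps b_def)
    finally show ?thesis .
  qed
  have c0: "0 \<le> c" unfolding c_def by (rule psd)
  have a0: "0 \<le> a" unfolding a_def by (rule psd)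
  show ?thesis
  proof (cases "c = 0")
    case True
    have "b = 0"
    proof (rule ccontr)
      assume "b \<noteq> 0"
      have "0 \<le> a + 2 * (- (a + 1) / (2 * b)) * b" using q[of "- (a + 1) / (2 * b)"] True by simp
      also have "\<dots> = -1" using \<open>b \<noteq> 0\<close> by (simp add: field_simps)
      finally show False by simp
    qed
    then show ?thesis using True a0 c0 unfolding a_def[symmetric] b_def[symmetric] c_def[symmetric] by simp
  next
    case False
    then have cp: "c > 0" using c0 by simp
    have "0 \<le> a + 2 * (- b / c) * b + (- b / c)\<^sup>2 * c" by (rule q)
    also have "\<dots> = a - b\<^sup>2 / c" using cp by (simp add: field_simps power2_eq_square)
    finally have "b\<^sup>2 / c \<le> a" by simp
    then have "b\<^sup>2 \<le> a * c" using cp by (simp add: field_simps)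
    then show ?thesis unfolding a_def[symmetric] b_def[symmetric] c_def[symmetric] .
  qed
qed

lemma quad_form_DtWD:
  fixes D :: "real^'m^'d" and W :: "real^'d^'d"
  shows "y \<bullet> ((transpose D ** W ** D) *v x) = (D *v y) \<bullet> (W *v (D *v x))"
proof -
  have "(transpose D ** W ** D) *v x = transpose D *v (W *v (D *v x))"
    by (simp add: matrix_vector_mul_assoc matrix_mul_assoc)
  then show ?thesis by (simp only: dot_transp transpose_transpose)
qed

lemma psd_zero:
  fixes S :: "real^'n^'n"
  assumes psd: "\<And>v. 0 \<le> v \<bullet> (S *v v)" and sym: "transpose S = S"
    and w: "w \<bullet> (S *v w) = 0"
  shows "S *v w = 0"
proof -
  have "((S *v w) \<bullet> (S *v w))\<^sup>2 \<le> ((S *v w) \<bullet> (S *v (S *v w))) * (w \<bullet> (S *v w))"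
    by (rule psd_cs[OF psd sym])
  then have "(S *v w) \<bullet> (S *v w) = 0" using w by simp
  then show ?thesis by simp
qed

lemma kernel_main:
  fixes S :: "real^'d^'d" and D :: "real^'m^'d" and \<rho> :: "real^'d" and \<beta> :: "real^'m" and q :: 'd
  assumes inv: "invertible S" and sym: "transpose S = S"
    and psd: "\<And>v. 0 \<le> v \<bullet> (S *v v)"
    and rho: "\<rho> = D *v \<beta>"
    and rk: "rank D = CARD('m)"
  defines "c \<equiv> kernel_matrix S D *v axis q 1"
  shows "c \<bullet> \<rho> = \<rho> $ q"
    and "c \<bullet> (S *v c) + (c \<bullet> \<rho>)\<^sup>2 \<le> S $ q $ q + (\<rho> $ q)\<^sup>2"
proof -
  define W where "W = matrix_inv S"
  have SW: "S ** W = mat 1" "W ** S = mat 1" using matrix_inv_both[OF inv] W_def by auto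
  have Wt: "transpose W = W" using matrix_inv_sym[OF inv sym] W_def by simp
  define G where "G = transpose D ** W ** D"
  have Gt: "transpose G = G" unfolding G_def
    by (simp add: matrix_transpose_mul Wt matrix_mul_assoc)
  have injD: "\<And>y. D *v y = 0 \<Longrightarrow> y = 0"
    using rk full_rank_injective[of D] matrix_left_invertible_injective[of D]
      matrix_left_invertible_ker[of D] by blast
  have Ginj: "G *v y = 0 \<Longrightarrow> y = 0" for y
  proof -
    assume Gy: "G *v y = 0"
    define u where "u = D *v y"
    define w where "w = W *v u"
    have uSw: "u = S *v w" unfolding w_def by (simp add: matrix_vector_mul_assoc SW)
    have "0 = y \<bullet> (G *v y)" using Gy by simp
    also have "\<dots> = u \<bullet> (W *v u)" unfolding G_def u_def
      by (rule quad_form_DtWD)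
    also have "\<dots> = w \<bullet> (S *v w)" unfolding uSw
      by (metis w_def uSw dot_transp inner_commute sym)
    finally have "S *v w = 0" using psd_zero[OF psd sym] by simp
    then have "D *v y = 0" using uSw u_def by simp
    then show "y = 0" by (rule injD)
  qed
  have Ginv: "invertible G"
    unfolding invertible_left_inverse matrix_left_invertible_ker using Ginj by blast
  define Gi where "Gi = matrix_inv G"
  have GGi: "G ** Gi = mat 1" "Gi ** G = mat 1" using matrix_inv_both[OF Ginv] Gi_def by auto
  have Git: "transpose Gi = Gi" using matrix_inv_sym[OF Ginv Gt] Gi_def by simp
  define e :: "real^'d" where "e = axis q 1"
  define z where "z = Gi *v (transpose D *v e)"
  have c_eq: "c = W *v (D *v z)"
    unfolding c_def kernel_matrix_def Let_def W_def[symmetric] G_def[symmetric] Gi_def[symmetric]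
      z_def e_def[symmetric]
    by (simp only: matrix_vector_mul_assoc matrix_mul_assoc)
  have Gz: "G *v z = transpose D *v e" unfolding z_def
    by (simp add: matrix_vector_mul_assoc GGi)
  have Sc: "S *v c = D *v z" unfolding c_eq by (simp add: matrix_vector_mul_assoc matrix_mul_assoc SW)
  show c1: "c \<bullet> \<rho> = \<rho> $ q"
  proof -
    have "c \<bullet> \<rho> = (D *v z) \<bullet> (W *v (D *v \<beta>))" unfolding c_eq rho
      by (metis dot_transp inner_commute Wt)
    also have "\<dots> = z \<bullet> (G *v \<beta>)" unfolding G_def
      by (rule quad_form_DtWD[symmetric])
    also have "\<dots> = (G *v z) \<bullet> \<beta>" by (metis dot_transp Gt)
    also have "\<dots> = e \<bullet> (D *v \<beta>)" unfolding Gz by (metis dot_transp)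
    also have "\<dots> = \<rho> $ q" unfolding e_def rho by (simp add: cart_eq_inner_axis inner_commute)
    finally show ?thesis .
  qed
  define qv where "qv = e \<bullet> (D *v z)"
  have cSc: "c \<bullet> (S *v c) = qv"
  proof -
    have "c \<bullet> (S *v c) = (W *v (D *v z)) \<bullet> (D *v z)" using Sc c_eq by simp
    also have "\<dots> = (D *v z) \<bullet> (W *v (D *v z))" by (metis dot_transp inner_commute Wt)
    also have "\<dots> = z \<bullet> (G *v z)" unfolding G_def
      by (rule quad_form_DtWD[symmetric])
    also have "\<dots> = e \<bullet> (D *v z)" unfolding Gz
      by (metis dot_transp inner_commute)
    finally show ?thesis unfolding qv_def .
  qed
  have eSc: "e \<bullet> (S *v c) = qv" unfolding Sc qv_def ..
  have cs: "qv\<^sup>2 \<le> (e \<bullet> (S *v e)) * qv"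
    using psd_cs[OF psd sym, of e c] unfolding eSc cSc .
  have qv0: "0 \<le> qv" using psd[of c] cSc by simp
  have eSe: "e \<bullet> (S *v e) = S $ q $ q" unfolding e_def
    by (simp add: matrix_vector_mult_basis column_def inner_axis inner_commute[of "axis q 1"])
  have "qv \<le> S $ q $ q"
  proof (cases "qv = 0")
    case True then show ?thesis using psd[of e] eSe by simp
  next
    case False
    then have "qv > 0" using qv0 by simp
    then show ?thesis using cs eSe by (simp add: power2_eq_square)
  qed
  then show "c \<bullet> (S *v c) + (c \<bullet> \<rho>)\<^sup>2 \<le> S $ q $ q + (\<rho> $ q)\<^sup>2"
    using cSc c1 by simp
qed

lemma weighted_cs:
  fixes p a :: "'d::finite \<Rightarrow> real"
  assumes pp: "\<And>j. p j > 0" and ps: "(\<Sum>j\<in>UNIV. p j) = 1"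
  shows "(\<Sum>j\<in>UNIV. p j * a j)\<^sup>2 \<le> (\<Sum>j\<in>UNIV. p j * (a j)\<^sup>2)"
proof -
  define m where "m = (\<Sum>j\<in>UNIV. p j * a j)"
  have "0 \<le> (\<Sum>j\<in>UNIV. p j * (a j - m)\<^sup>2)"
    using pp by (intro sum_nonneg) (simp add: less_imp_le)
  also have "\<dots> = (\<Sum>j\<in>UNIV. p j * (a j)\<^sup>2) - 2 * m * (\<Sum>j\<in>UNIV. p j * a j) + m\<^sup>2 * (\<Sum>j\<in>UNIV. p j)"
    by (simp add: power2_diff algebra_simps sum.distrib sum_subtractf sum_distrib_left sum_distrib_right)
  also have "\<dots> = (\<Sum>j\<in>UNIV. p j * (a j)\<^sup>2) - m\<^sup>2"
    unfolding m_def[symmetric] ps by (simp add: power2_eq_square)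
  finally show ?thesis unfolding m_def by simp
qed

lemma cov_structure:
  fixes s \<rho> :: "real^'d" and p :: "'d \<Rightarrow> real"
  assumes pp: "\<And>j. p j > 0" and ps: "(\<Sum>j\<in>UNIV. p j) = 1"
    and le: "\<And>j. (\<rho> $ j)\<^sup>2 \<le> p j * s $ j"
    and S: "S = (\<chi> j k. (if j = k then s $ j else 0) - \<rho> $ j * \<rho> $ k)"
  shows "transpose S = S"
    and "\<And>v. v \<bullet> (S *v v) = (\<Sum>j\<in>UNIV. (v $ j)\<^sup>2 * s $ j) - (v \<bullet> \<rho>)\<^sup>2"
    and "\<And>v. 0 \<le> v \<bullet> (S *v v)"
    and "S $ q $ q = s $ q - (\<rho> $ q)\<^sup>2"
proof -
  show "transpose S = S" unfolding S by (simp add: transpose_def vec_eq_iff mult.commute)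
  show eq: "v \<bullet> (S *v v) = (\<Sum>j\<in>UNIV. (v $ j)\<^sup>2 * s $ j) - (v \<bullet> \<rho>)\<^sup>2" for v
  proof -
    have "v \<bullet> (S *v v) = (\<Sum>j\<in>UNIV. v $ j * (\<Sum>k\<in>UNIV. ((if j = k then s $ j else 0) - \<rho> $ j * \<rho> $ k) * v $ k))"
      unfolding S by (simp add: inner_vec_def matrix_vector_mult_def)
    also have "\<dots> = (\<Sum>j\<in>UNIV. v $ j * (s $ j * v $ j - \<rho> $ j * (\<Sum>k\<in>UNIV. \<rho> $ k * v $ k)))"
    proof (rule sum.cong[OF refl])
      fix j
      have "(\<Sum>k\<in>UNIV. ((if j = k then s $ j else 0) - \<rho> $ j * \<rho> $ k) * v $ k)
          = (\<Sum>k\<in>UNIV. (if j = k then s $ j * v $ k else 0)) - (\<Sum>k\<in>UNIV. \<rho> $ j * (\<rho> $ k * v $ k))"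
        by (simp only: left_diff_distrib sum_subtractf mult.assoc if_distrib[of "\<lambda>x. x * v $ _"] mult_zero_left)
      also have "\<dots> = s $ j * v $ j - \<rho> $ j * (\<Sum>k\<in>UNIV. \<rho> $ k * v $ k)"
        by (simp add: sum_distrib_left if_distrib sum.delta cong: if_cong)
      finally show "v $ j * (\<Sum>k\<in>UNIV. ((if j = k then s $ j else 0) - \<rho> $ j * \<rho> $ k) * v $ k)
          = v $ j * (s $ j * v $ j - \<rho> $ j * (\<Sum>k\<in>UNIV. \<rho> $ k * v $ k))" by simp
    qed
    also have "\<dots> = (\<Sum>j\<in>UNIV. (v $ j)\<^sup>2 * s $ j) - (\<Sum>j\<in>UNIV. v $ j * \<rho> $ j) * (\<Sum>k\<in>UNIV. \<rho> $ k * v $ k)"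
      by (simp add: right_diff_distrib sum_subtractf sum_distrib_right power2_eq_square algebra_simps)
    also have "\<dots> = (\<Sum>j\<in>UNIV. (v $ j)\<^sup>2 * s $ j) - (v \<bullet> \<rho>)\<^sup>2"
      by (simp add: inner_vec_def power2_eq_square mult.commute)
    finally show ?thesis .
  qed
  show "0 \<le> v \<bullet> (S *v v)" for v
  proof -
    define a where "a j = v $ j * \<rho> $ j / p j" for j
    have "(v \<bullet> \<rho>)\<^sup>2 = (\<Sum>j\<in>UNIV. p j * a j)\<^sup>2"
      unfolding a_def inner_vec_def using pp by (simp add: less_imp_neq[symmetric])
    also have "\<dots> \<le> (\<Sum>j\<in>UNIV. p j * (a j)\<^sup>2)" by (rule weighted_cs[OF pp ps])
    also have "\<dots> \<le> (\<Sum>j\<in>UNIV. (v $ j)\<^sup>2 * s $ j)"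
    proof (rule sum_mono)
      fix j
      have "p j * (a j)\<^sup>2 = (v $ j)\<^sup>2 * (\<rho> $ j)\<^sup>2 / p j"
        unfolding a_def using pp[of j] by (simp add: power2_eq_square field_simps)
      also have "\<dots> \<le> (v $ j)\<^sup>2 * (p j * s $ j) / p j"
        using le[of j] pp[of j] by (intro divide_right_mono mult_left_mono) auto
      also have "\<dots> = (v $ j)\<^sup>2 * s $ j" using pp[of j] by simp
      finally show "p j * (a j)\<^sup>2 \<le> (v $ j)\<^sup>2 * s $ j" .
    qed
    finally show ?thesis unfolding eq by simp
  qed
  show "S $ q $ q = s $ q - (\<rho> $ q)\<^sup>2" unfolding S by (simp add: power2_eq_square)
qed

lemma kernel_ineq:
  fixes s \<rho> :: "real^'d" and p :: "'d \<Rightarrow> real" and D :: "real^'m^'d" and \<beta> :: "real^'m" and q :: 'd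
  assumes pp: "\<And>j. p j > 0" and ps: "(\<Sum>j\<in>UNIV. p j) = 1"
    and le: "\<And>j. (\<rho> $ j)\<^sup>2 \<le> p j * s $ j"
    and S: "S = (\<chi> j k. (if j = k then s $ j else 0) - \<rho> $ j * \<rho> $ k)"
    and inv: "invertible S"
    and rho: "\<rho> = D *v \<beta>"
    and rk: "rank D = CARD('m)"
  defines "c \<equiv> kernel_matrix S D *v axis q 1"
  shows "c \<bullet> \<rho> = \<rho> $ q"
    and "(\<Sum>j\<in>UNIV. (c $ j)\<^sup>2 * s $ j) \<le> s $ q"
proof -
  note cs = cov_structure[OF pp ps le S]
  note km = kernel_main[OF inv cs(1) cs(3) rho rk, of q, folded c_def]
  show "c \<bullet> \<rho> = \<rho> $ q" by (rule km(1))
  show "(\<Sum>j\<in>UNIV. (c $ j)\<^sup>2 * s $ j) \<le> s $ q"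
    using km(2) cs(2)[of c] cs(4)[of q] by simp
qed

definition cm :: "'w measure \<Rightarrow> ('w \<Rightarrow> real^'n^'m) \<Rightarrow> bool" where
  "cm N \<Phi> \<longleftrightarrow> (\<forall>i j. (\<lambda>\<omega>. \<Phi> \<omega> $ i $ j) \<in> borel_measurable N)"

lemma cmD: "cm N \<Phi> \<Longrightarrow> (\<lambda>\<omega>. \<Phi> \<omega> $ i $ j) \<in> borel_measurable N"
  unfolding cm_def by blast

lemma cm_const: "cm N (\<lambda>_. C)" unfolding cm_def by simp

lemma cm_mult: "cm N \<Phi> \<Longrightarrow> cm N \<Psi> \<Longrightarrow> cm N (\<lambda>\<omega>. \<Phi> \<omega> ** \<Psi> \<omega>)"
  unfolding cm_def matrix_matrix_mult_def
  by (auto intro!: borel_measurable_sum borel_measurable_times)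

lemma cm_transpose: "cm N \<Phi> \<Longrightarrow> cm N (\<lambda>\<omega>. transpose (\<Phi> \<omega>))"
  unfolding cm_def transpose_def by simp

lemma det_measurable:
  fixes \<Phi> :: "'w \<Rightarrow> real^'n^'n"
  assumes "cm N \<Phi>"
  shows "(\<lambda>\<omega>. det (\<Phi> \<omega>)) \<in> borel_measurable N"
  unfolding det_def
  using cmD[OF assms]
  by (auto intro!: borel_measurable_sum borel_measurable_times borel_measurable_prod)

lemma matrix_inv_cramer:
  fixes A :: "real^'n^'n"
  assumes "det A \<noteq> 0"
  shows "matrix_inv A $ i $ j = det (\<chi> r s. if s = i then axis j 1 $ r else A $ r $ s) / det A"
proof -
  have inv: "invertible A" using assms invertible_det_nz by blast
  have "A *v (matrix_inv A *v axis j 1) = axis j 1"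
    by (simp add: matrix_vector_mul_assoc matrix_inv_both[OF inv])
  then have "matrix_inv A *v axis j 1 = (\<chi> k. det (\<chi> r s. if s = k then axis j 1 $ r else A $ r $ s) / det A)"
    using cramer[OF assms] by blast
  then have "(matrix_inv A *v axis j 1) $ i = det (\<chi> r s. if s = i then axis j 1 $ r else A $ r $ s) / det A"
    by simp
  then show ?thesis by (simp add: matrix_vector_mult_basis column_def)
qed

lemma matrix_inv_noninv:
  fixes A :: "real^'n^'n"
  assumes "\<not> invertible A"
  shows "matrix_inv A = (SOME A' :: real^'n^'n. False)"
proof -
  have "(\<lambda>A'. A ** A' = mat 1 \<and> A' ** A = mat 1) = (\<lambda>_. False)"
    using assms unfolding invertible_def by auto
  then show ?thesis unfolding matrix_inv_def by simp
qed

lemma cm_matrix_inv: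
  fixes \<Phi> :: "'w \<Rightarrow> real^'n^'n"
  assumes cmP: "cm N \<Phi>"
  shows "cm N (\<lambda>\<omega>. matrix_inv (\<Phi> \<omega>))"
  unfolding cm_def
proof (intro allI)
  fix i j
  define C where "C = (SOME A' :: real^'n^'n. False)"
  have eq: "matrix_inv (\<Phi> \<omega>) $ i $ j =
      (if det (\<Phi> \<omega>) \<noteq> 0 then det (\<chi> r s. if s = i then axis j 1 $ r else \<Phi> \<omega> $ r $ s) / det (\<Phi> \<omega>)
       else C $ i $ j)" for \<omega>
    using matrix_inv_cramer[of "\<Phi> \<omega>" i j] matrix_inv_noninv[of "\<Phi> \<omega>"] invertible_det_nz[of "\<Phi> \<omega>"]
    unfolding C_def by auto
  have cm2: "cm N (\<lambda>\<omega>. (\<chi> r s. if s = i then axis j 1 $ r else \<Phi> \<omega> $ r $ s) :: real^'n^'n)"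
    unfolding cm_def using cmD[OF cmP] by auto
  have m1: "(\<lambda>\<omega>. det (\<Phi> \<omega>)) \<in> borel_measurable N" by (rule det_measurable[OF cmP])
  have m2: "(\<lambda>\<omega>. det ((\<chi> r s. if s = i then axis j 1 $ r else \<Phi> \<omega> $ r $ s) :: real^'n^'n)) \<in> borel_measurable N"
    by (rule det_measurable[OF cm2])
  show "(\<lambda>\<omega>. matrix_inv (\<Phi> \<omega>) $ i $ j) \<in> borel_measurable N"
    unfolding eq using m1 m2 by measurable
qed

lemma cm_kernel:
  fixes \<Phi> :: "'w \<Rightarrow> real^'d^'d" and D :: "real^'m^'d"
  assumes "cm N \<Phi>"
  shows "cm N (\<lambda>\<omega>. kernel_matrix (\<Phi> \<omega>) D)"
  unfolding kernel_matrix_def Let_def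
  by (intro cm_mult cm_matrix_inv cm_transpose cm_const assms)

lemma sq_int_imp_int:
  fixes f :: "'a \<Rightarrow> real"
  assumes "finite_measure N" "f \<in> borel_measurable N" "integrable N (\<lambda>x. (f x)\<^sup>2)"
  shows "integrable N f"
proof -
  interpret finite_measure N by fact
  have "integrable N (\<lambda>x. 1 + (f x)\<^sup>2)" using assms(3) by simp
  then show ?thesis
  proof (rule Bochner_Integration.integrable_bound)
    show "f \<in> borel_measurable N" by fact
    show "AE x in N. norm (f x) \<le> norm (1 + (f x)\<^sup>2)"
    proof (rule always_eventually, intro allI)
      fix x
      have h: "0 \<le> (\<bar>f x\<bar> - 1)\<^sup>2" by simp
      have "(\<bar>f x\<bar> - 1)\<^sup>2 = (f x)\<^sup>2 - 2 * \<bar>f x\<bar> + 1"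
        by (simp add: power2_diff)
      then have "\<bar>f x\<bar> \<le> 1 + (f x)\<^sup>2" using h by linarith
      then show "norm (f x) \<le> norm (1 + (f x)\<^sup>2)" by simp
    qed
  qed
qed

locale single =
  fixes M :: "'w measure" and X :: "'w \<Rightarrow> 'x::topological_space" and A :: "'w \<Rightarrow> 'd::finite"
    and R :: "'w \<Rightarrow> real" and p :: "'d \<Rightarrow> 'x \<Rightarrow> real" and kap :: "'x \<Rightarrow> 'd \<Rightarrow> real measure"
  assumes prob: "prob_space M"
    and X_meas: "X \<in> M \<rightarrow>\<^sub>M borel"
    and A_meas: "A \<in> M \<rightarrow>\<^sub>M count_space UNIV"
    and R_meas: "R \<in> M \<rightarrow>\<^sub>M borel"
    and p_meas: "\<And>k. p k \<in> borel_measurable borel"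
    and p_pos: "\<And>k x. p k x > 0"
    and p_sum: "\<And>x. (\<Sum>k\<in>UNIV. p k x) = 1"
    and A_cond: "\<And>k B. B \<in> sets borel \<Longrightarrow>
                   measure M {\<omega> \<in> space M. X \<omega> \<in> B \<and> A \<omega> = k}
                   = (\<integral>\<omega>. indicator B (X \<omega>) * p k (X \<omega>) \<partial>M)"
    and kap_meas: "\<And>k. (\<lambda>x. kap x k) \<in> borel \<rightarrow>\<^sub>M prob_algebra borel"
    and R_cond: "\<And>k B C. B \<in> sets borel \<Longrightarrow> C \<in> sets borel \<Longrightarrow>
                   measure M {\<omega> \<in> space M. X \<omega> \<in> B \<and> A \<omega> = k \<and> R \<omega> \<in> C}
                   = (\<integral>\<omega>. indicator {\<omega>. X \<omega> \<in> B \<and> A \<omega> = k} \<omega>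
                          * measure (kap (X \<omega>) k) C \<partial>M)"
    and R_sq: "integrable M (\<lambda>\<omega>. (R \<omega>)\<^sup>2)"
    and Y_sq: "\<And>j. integrable M (\<lambda>\<omega>. (R \<omega> * (if A \<omega> = j then 1 else 0) / p j (X \<omega>))\<^sup>2)"
begin

lemmas base_meas [measurable] = X_meas A_meas R_meas p_meas

definition "F = vimage_algebra (space M) X borel"
definition "Y k \<omega> = R \<omega> * (if A \<omega> = k then 1 else 0) / p k (X \<omega>)"

lemma p_le1: "p k x \<le> 1"
proof -
  have "p k x \<le> (\<Sum>j\<in>UNIV. p j x)"
    by (rule member_le_sum) (auto simp: less_imp_le[OF p_pos])
  then show ?thesis using p_sum by simp
qed

lemma X_F: "X \<in> F \<rightarrow>\<^sub>M borel"
  unfolding F_def by (rule measurable_vimage_algebra1) simp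

lemma sets_F: "sets F = {X -` B \<inter> space M | B. B \<in> sets borel}"
  unfolding F_def by (rule sets_vimage_algebra2) simp

lemma space_F: "space F = space M"
  unfolding F_def by simp

lemma subalg: "subalgebra M F"
  unfolding subalgebra_def
proof
  show "sets F \<subseteq> sets M" unfolding sets_F using X_meas by (auto intro: measurable_sets)
qed (rule space_F)

sublocale P: prob_space M by (rule prob)

sublocale CE: finite_measure_subalgebra M F
  by unfold_locales (rule subalg)

lemma F_to_M: "f \<in> borel_measurable F \<Longrightarrow> f \<in> borel_measurable M"
  by (rule measurable_from_subalg[OF subalg])

lemma pX_F [measurable]: "(\<lambda>\<omega>. p k (X \<omega>)) \<in> borel_measurable F"
  using p_meas X_F by measurable

lemma pX_M [measurable]: "(\<lambda>\<omega>. p k (X \<omega>)) \<in> borel_measurable M"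
  using p_meas X_meas by measurable

lemma A_set [measurable]: "{\<omega> \<in> space M. A \<omega> = k} \<in> sets M"
proof -
  have "{\<omega> \<in> space M. A \<omega> = k} = A -` {k} \<inter> space M" by auto
  then show ?thesis using measurable_sets[OF A_meas, of "{k}"] by simp
qed

lemma X_set: "B \<in> sets borel \<Longrightarrow> {\<omega> \<in> space M. X \<omega> \<in> B} \<in> sets M"
proof -
  assume B: "B \<in> sets borel"
  have "{\<omega> \<in> space M. X \<omega> \<in> B} = X -` B \<inter> space M" by auto
  then show ?thesis using measurable_sets[OF X_meas B] by simp
qed

lemma R_set: "C \<in> sets borel \<Longrightarrow> {\<omega> \<in> space M. R \<omega> \<in> C} \<in> sets M"
proof -
  assume C: "C \<in> sets borel"
  have "{\<omega> \<in> space M. R \<omega> \<in> C} = R -` C \<inter> space M" by auto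
  then show ?thesis using measurable_sets[OF R_meas C] by simp
qed

lemma XA_set: "B \<in> sets borel \<Longrightarrow> {\<omega> \<in> space M. X \<omega> \<in> B \<and> A \<omega> = k} \<in> sets M"
proof -
  assume B: "B \<in> sets borel"
  have "{\<omega> \<in> space M. X \<omega> \<in> B \<and> A \<omega> = k} = {\<omega> \<in> space M. X \<omega> \<in> B} \<inter> {\<omega> \<in> space M. A \<omega> = k}" by auto
  then show ?thesis using X_set[OF B] A_set by simp
qed

lemma XAR_set: "B \<in> sets borel \<Longrightarrow> C \<in> sets borel \<Longrightarrow> {\<omega> \<in> space M. X \<omega> \<in> B \<and> A \<omega> = k \<and> R \<omega> \<in> C} \<in> sets M"
proof -
  assume B: "B \<in> sets borel" and C: "C \<in> sets borel"
  have "{\<omega> \<in> space M. X \<omega> \<in> B \<and> A \<omega> = k \<and> R \<omega> \<in> C} = {\<omega> \<in> space M. X \<omega> \<in> B \<and> A \<omega> = k} \<inter> {\<omega> \<in> space M. R \<omega> \<in> C}" by auto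
  then show ?thesis using XA_set[OF B] R_set[OF C] by simp
qed

lemma indA_meas [measurable]: "(\<lambda>\<omega>. indicator {\<omega>. A \<omega> = k} \<omega> :: 'a::{zero_neq_one,topological_space}) \<in> borel_measurable M"
proof -
  have "(\<lambda>\<omega>. indicator {\<omega>. A \<omega> = k} \<omega> :: 'a) = (\<lambda>\<omega>. indicator {k} (A \<omega>))"
    by (auto simp: indicator_def)
  then show ?thesis using A_meas by simp
qed

lemma kap_sets: "sets (kap x k) = sets borel"
  using measurable_space[OF kap_meas[of k], of x] by (simp add: space_prob_algebra)

lemma kap_prob: "prob_space (kap x k)"
  using measurable_space[OF kap_meas[of k], of x] by (simp add: space_prob_algebra)

lemma kap_sub: "(\<lambda>x. kap x k) \<in> borel \<rightarrow>\<^sub>M subprob_algebra borel"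
  using kap_meas by (rule measurable_prob_algebraD)

lemma G_meas: 
  assumes g: "g \<in> borel_measurable borel"
  shows "(\<lambda>x. \<integral>\<^sup>+ r. g r \<partial>kap x k) \<in> borel_measurable borel"
  by (rule nn_integral_measurable_subprob_algebra2[OF _ kap_sub]) (use g in measurable)

lemma GX_F:
  assumes g: "g \<in> borel_measurable borel"
  shows "(\<lambda>\<omega>. \<integral>\<^sup>+ r. g r \<partial>kap (X \<omega>) k) \<in> borel_measurable F"
  using measurable_compose[OF X_F G_meas[OF g]] by simp

lemma GX_M:
  assumes g: "g \<in> borel_measurable borel"
  shows "(\<lambda>\<omega>. \<integral>\<^sup>+ r. g r \<partial>kap (X \<omega>) k) \<in> borel_measurable M"
  using measurable_compose[OF X_meas G_meas[OF g]] by simp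

lemma AL: "AE \<omega> in M. ennreal (p k (X \<omega>)) = nn_cond_exp M F (\<lambda>\<omega>. indicator {\<omega>. A \<omega> = k} \<omega>) \<omega>"
proof (rule CE.nn_cond_exp_charact)
  show "(\<lambda>\<omega>. indicator {\<omega>. A \<omega> = k} \<omega> :: ennreal) \<in> borel_measurable M"
    by (rule indA_meas)
  show "(\<lambda>\<omega>. ennreal (p k (X \<omega>))) \<in> borel_measurable F" by measurable
  fix S assume "S \<in> sets F"
  then obtain B where B: "B \<in> sets borel" and S: "S = X -` B \<inter> space M" unfolding sets_F by auto
  have "(\<integral>\<^sup>+ x \<in> S. (indicator {\<omega>. A \<omega> = k} x :: ennreal) \<partial>M)
      = (\<integral>\<^sup>+ x. indicator {\<omega> \<in> space M. X \<omega> \<in> B \<and> A \<omega> = k} x \<partial>M)"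
    unfolding S by (intro nn_integral_cong) (auto simp: indicator_def)
  also have "\<dots> = emeasure M {\<omega> \<in> space M. X \<omega> \<in> B \<and> A \<omega> = k}"
    using B by (intro nn_integral_indicator XA_set)
  also have "\<dots> = ennreal (\<integral>\<omega>. indicator B (X \<omega>) * p k (X \<omega>) \<partial>M)"
    unfolding P.emeasure_eq_measure A_cond[OF B] ..
  also have "\<dots> = (\<integral>\<^sup>+ \<omega>. ennreal (indicator B (X \<omega>) * p k (X \<omega>)) \<partial>M)"
  proof (rule nn_integral_eq_integral[symmetric])
    show "integrable M (\<lambda>\<omega>. indicator B (X \<omega>) * p k (X \<omega>))"
      by (rule P.integrable_const_bound[where B=1])
         (use B X_meas p_le1 p_pos in \<open>auto simp: indicator_def abs_of_pos less_imp_le intro!: always_eventually\<close>)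
    show "AE x in M. 0 \<le> indicator B (X x) * p k (X x)"
      using p_pos by (auto intro!: always_eventually simp: less_imp_le)
  qed
  also have "\<dots> = (\<integral>\<^sup>+ x \<in> S. ennreal (p k (X x)) \<partial>M)"
    unfolding S by (intro nn_integral_cong) (auto simp: indicator_def)
  finally show "(\<integral>\<^sup>+ x \<in> S. (indicator {\<omega>. A \<omega> = k} x :: ennreal) \<partial>M) = (\<integral>\<^sup>+ x \<in> S. ennreal (p k (X x)) \<partial>M)" .
qed


lemma kapC_meas [measurable]: "C \<in> sets borel \<Longrightarrow> (\<lambda>x. emeasure (kap x k) C) \<in> borel_measurable borel"
  by (rule measurable_compose[OF kap_sub measurable_emeasure_subprob_algebra])

lemma kap_emeasure: "emeasure (kap x k) C = ennreal (measure (kap x k) C)"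
proof -
  interpret K: prob_space "kap x k" by (rule kap_prob)
  show ?thesis by (rule K.emeasure_eq_measure)
qed

lemma KL:
  assumes B: "B \<in> sets borel" and g: "g \<in> borel_measurable borel"
  shows "(\<integral>\<^sup>+\<omega>. indicator B (X \<omega>) * (indicator {\<omega>. A \<omega> = k} \<omega> * g (R \<omega>)) \<partial>M)
       = (\<integral>\<^sup>+\<omega>. indicator B (X \<omega>) * (ennreal (p k (X \<omega>)) * (\<integral>\<^sup>+r. g r \<partial>kap (X \<omega>) k)) \<partial>M)"
  using g
proof (induction rule: borel_measurable_induct)
  case (cong f g)
  then have "f = g" by auto
  then show ?case using cong by simp
next
  case (set C)
  then have C: "C \<in> sets borel" by simp
  note [measurable] = B C
  have hm: "(\<lambda>\<omega>. indicator B (X \<omega>) * emeasure (kap (X \<omega>) k) C) \<in> borel_measurable F"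
    using X_F by measurable
  have "(\<integral>\<^sup>+\<omega>. indicator B (X \<omega>) * (indicator {\<omega>. A \<omega> = k} \<omega> * indicator C (R \<omega>)) \<partial>M)
      = (\<integral>\<^sup>+\<omega>. indicator {\<omega> \<in> space M. X \<omega> \<in> B \<and> A \<omega> = k \<and> R \<omega> \<in> C} \<omega> \<partial>M)"
    by (intro nn_integral_cong) (auto simp: indicator_def)
  also have "\<dots> = emeasure M {\<omega> \<in> space M. X \<omega> \<in> B \<and> A \<omega> = k \<and> R \<omega> \<in> C}"
    by (intro nn_integral_indicator XAR_set B C)
  also have "\<dots> = ennreal (\<integral>\<omega>. indicator {\<omega>. X \<omega> \<in> B \<and> A \<omega> = k} \<omega> * measure (kap (X \<omega>) k) C \<partial>M)"
    unfolding P.emeasure_eq_measure R_cond[OF B C] ..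
  also have "\<dots> = (\<integral>\<^sup>+\<omega>. ennreal (indicator {\<omega>. X \<omega> \<in> B \<and> A \<omega> = k} \<omega> * measure (kap (X \<omega>) k) C) \<partial>M)"
  proof (rule nn_integral_eq_integral[symmetric])
    have m1: "(\<lambda>\<omega>. indicator {\<omega>. X \<omega> \<in> B \<and> A \<omega> = k} \<omega> :: real) \<in> borel_measurable M"
    proof -
      have "(\<lambda>\<omega>. indicator {\<omega>. X \<omega> \<in> B \<and> A \<omega> = k} \<omega> :: real) = (\<lambda>\<omega>. indicator B (X \<omega>) * indicator {\<omega>. A \<omega> = k} \<omega>)"
        by (auto simp: indicator_def)
      then show ?thesis by simp
    qed
    have m2: "(\<lambda>\<omega>. measure (kap (X \<omega>) k) C) \<in> borel_measurable M"
    proof -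
      have "(\<lambda>\<omega>. measure (kap (X \<omega>) k) C) = (\<lambda>\<omega>. enn2real (emeasure (kap (X \<omega>) k) C))"
        by (simp add: measure_def)
      then show ?thesis by simp
    qed
    show "integrable M (\<lambda>\<omega>. indicator {\<omega>. X \<omega> \<in> B \<and> A \<omega> = k} \<omega> * measure (kap (X \<omega>) k) C)"
      by (rule P.integrable_const_bound[where B=1])
        (use m1 m2 prob_space.prob_le_1[OF kap_prob] in \<open>auto simp: indicator_def intro!: always_eventually\<close>)
    show "AE \<omega> in M. 0 \<le> indicator {\<omega>. X \<omega> \<in> B \<and> A \<omega> = k} \<omega> * measure (kap (X \<omega>) k) C"
      by (auto intro!: always_eventually)
  qed
  also have "\<dots> = (\<integral>\<^sup>+\<omega>. (indicator B (X \<omega>) * emeasure (kap (X \<omega>) k) C) * indicator {\<omega>. A \<omega> = k} \<omega> \<partial>M)"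
    by (intro nn_integral_cong) (auto simp: indicator_def kap_emeasure)
  also have "\<dots> = (\<integral>\<^sup>+\<omega>. (indicator B (X \<omega>) * emeasure (kap (X \<omega>) k) C) * nn_cond_exp M F (\<lambda>\<omega>. indicator {\<omega>. A \<omega> = k} \<omega>) \<omega> \<partial>M)"
    by (rule CE.nn_cond_exp_intg[symmetric]) (use hm in auto)
  also have "\<dots> = (\<integral>\<^sup>+\<omega>. (indicator B (X \<omega>) * emeasure (kap (X \<omega>) k) C) * ennreal (p k (X \<omega>)) \<partial>M)"
    using AL[of k] by (intro nn_integral_cong_AE) auto
  also have "\<dots> = (\<integral>\<^sup>+\<omega>. indicator B (X \<omega>) * (ennreal (p k (X \<omega>)) * (\<integral>\<^sup>+r. indicator C r \<partial>kap (X \<omega>) k)) \<partial>M)"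
    using C kap_sets by (intro nn_integral_cong) (simp add: nn_integral_indicator mult_ac)
  finally show ?case .
next
  case (mult u c)
  note [measurable] = B mult.hyps(2) GX_M[OF mult.hyps(2), of k]
  have um: "u \<in> borel_measurable (kap x k)" for x using mult.hyps(2) measurable_cong_sets[OF kap_sets refl] by blast
  have "(\<integral>\<^sup>+\<omega>. indicator B (X \<omega>) * (indicator {\<omega>. A \<omega> = k} \<omega> * (c * u (R \<omega>))) \<partial>M)
      = (\<integral>\<^sup>+\<omega>. c * (indicator B (X \<omega>) * (indicator {\<omega>. A \<omega> = k} \<omega> * u (R \<omega>))) \<partial>M)"
    by (simp add: mult_ac)
  also have "\<dots> = c * (\<integral>\<^sup>+\<omega>. indicator B (X \<omega>) * (indicator {\<omega>. A \<omega> = k} \<omega> * u (R \<omega>)) \<partial>M)"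
    using B mult.hyps(2) by (intro nn_integral_cmult) measurable
  also have "\<dots> = c * (\<integral>\<^sup>+\<omega>. indicator B (X \<omega>) * (ennreal (p k (X \<omega>)) * (\<integral>\<^sup>+r. u r \<partial>kap (X \<omega>) k)) \<partial>M)"
    using mult.IH by simp
  also have "\<dots> = (\<integral>\<^sup>+\<omega>. c * (indicator B (X \<omega>) * (ennreal (p k (X \<omega>)) * (\<integral>\<^sup>+r. u r \<partial>kap (X \<omega>) k))) \<partial>M)"
    using B mult.hyps(2) G_meas[OF mult.hyps(2), of k] by (intro nn_integral_cmult[symmetric]) measurable
  also have "\<dots> = (\<integral>\<^sup>+\<omega>. indicator B (X \<omega>) * (ennreal (p k (X \<omega>)) * (\<integral>\<^sup>+r. c * u r \<partial>kap (X \<omega>) k)) \<partial>M)"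
    using um by (intro nn_integral_cong) (simp add: nn_integral_cmult mult_ac)
  finally show ?case .
next
  case (add u v)
  note [measurable] = B add.hyps(1) add.hyps(3) GX_M[OF add.hyps(1), of k] GX_M[OF add.hyps(3), of k]
  have um: "u \<in> borel_measurable (kap x k)" "v \<in> borel_measurable (kap x k)" for x
    using add.hyps(1) add.hyps(3) measurable_cong_sets[OF kap_sets refl] by blast+
  have "(\<integral>\<^sup>+\<omega>. indicator B (X \<omega>) * (indicator {\<omega>. A \<omega> = k} \<omega> * (v (R \<omega>) + u (R \<omega>))) \<partial>M)
      = (\<integral>\<^sup>+\<omega>. indicator B (X \<omega>) * (indicator {\<omega>. A \<omega> = k} \<omega> * v (R \<omega>)) + indicator B (X \<omega>) * (indicator {\<omega>. A \<omega> = k} \<omega> * u (R \<omega>)) \<partial>M)"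
    by (simp add: distrib_left)
  also have "\<dots> = (\<integral>\<^sup>+\<omega>. indicator B (X \<omega>) * (indicator {\<omega>. A \<omega> = k} \<omega> * v (R \<omega>)) \<partial>M) + (\<integral>\<^sup>+\<omega>. indicator B (X \<omega>) * (indicator {\<omega>. A \<omega> = k} \<omega> * u (R \<omega>)) \<partial>M)"
    using B add.hyps(1) add.hyps(3) by (intro nn_integral_add) measurable
  also have "\<dots> = (\<integral>\<^sup>+\<omega>. indicator B (X \<omega>) * (ennreal (p k (X \<omega>)) * (\<integral>\<^sup>+r. v r \<partial>kap (X \<omega>) k)) \<partial>M) + (\<integral>\<^sup>+\<omega>. indicator B (X \<omega>) * (ennreal (p k (X \<omega>)) * (\<integral>\<^sup>+r. u r \<partial>kap (X \<omega>) k)) \<partial>M)"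
    using add.IH by simp
  also have "\<dots> = (\<integral>\<^sup>+\<omega>. indicator B (X \<omega>) * (ennreal (p k (X \<omega>)) * (\<integral>\<^sup>+r. v r \<partial>kap (X \<omega>) k)) + indicator B (X \<omega>) * (ennreal (p k (X \<omega>)) * (\<integral>\<^sup>+r. u r \<partial>kap (X \<omega>) k)) \<partial>M)"
    using B G_meas[OF add.hyps(1), of k] G_meas[OF add.hyps(3), of k] by (intro nn_integral_add[symmetric]) measurable
  also have "\<dots> = (\<integral>\<^sup>+\<omega>. indicator B (X \<omega>) * (ennreal (p k (X \<omega>)) * (\<integral>\<^sup>+r. v r + u r \<partial>kap (X \<omega>) k)) \<partial>M)"
    using um by (intro nn_integral_cong) (simp add: nn_integral_add distrib_left)
  finally show ?case .
next
  case (seq U)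
  note [measurable] = B seq.hyps(1) GX_M[OF seq.hyps(1), of k]
  have um: "U i \<in> borel_measurable (kap x k)" for i x
    using seq.hyps(1) measurable_cong_sets[OF kap_sets refl] by blast
  have SUPap: "(\<Squnion> range U) r = (\<Squnion>i. U i r)" for r by (simp add: SUP_apply image_comp comp_def)
  have inc1: "incseq (\<lambda>i \<omega>. indicator B (X \<omega>) * (indicator {\<omega>. A \<omega> = k} \<omega> * U i (R \<omega>)))"
    using seq.hyps(3) by (auto simp: incseq_def le_fun_def intro!: mult_left_mono)
  have incG: "incseq (\<lambda>i. \<integral>\<^sup>+r. U i r \<partial>kap x k)" for x
    using seq.hyps(3) by (auto simp: incseq_def le_fun_def intro!: nn_integral_mono)
  have inc2: "incseq (\<lambda>i \<omega>. indicator B (X \<omega>) * (ennreal (p k (X \<omega>)) * (\<integral>\<^sup>+r. U i r \<partial>kap (X \<omega>) k)))"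
    using incG by (auto simp: incseq_def le_fun_def intro!: mult_left_mono)
  have "(\<integral>\<^sup>+\<omega>. indicator B (X \<omega>) * (indicator {\<omega>. A \<omega> = k} \<omega> * (\<Squnion> range U) (R \<omega>)) \<partial>M)
      = (\<integral>\<^sup>+\<omega>. (\<Squnion>i. indicator B (X \<omega>) * (indicator {\<omega>. A \<omega> = k} \<omega> * U i (R \<omega>))) \<partial>M)"
    unfolding SUPap by (simp add: SUP_mult_left_ennreal)
  also have "\<dots> = (\<Squnion>i. (\<integral>\<^sup>+\<omega>. indicator B (X \<omega>) * (indicator {\<omega>. A \<omega> = k} \<omega> * U i (R \<omega>)) \<partial>M))"
    using B seq.hyps(1) inc1 by (intro nn_integral_monotone_convergence_SUP) measurable
  also have "\<dots> = (\<Squnion>i. (\<integral>\<^sup>+\<omega>. indicator B (X \<omega>) * (ennreal (p k (X \<omega>)) * (\<integral>\<^sup>+r. U i r \<partial>kap (X \<omega>) k)) \<partial>M))"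
    using seq.IH by simp
  also have "\<dots> = (\<integral>\<^sup>+\<omega>. (\<Squnion>i. indicator B (X \<omega>) * (ennreal (p k (X \<omega>)) * (\<integral>\<^sup>+r. U i r \<partial>kap (X \<omega>) k))) \<partial>M)"
    using B G_meas[OF seq.hyps(1), of k] inc2 by (intro nn_integral_monotone_convergence_SUP[symmetric]) measurable
  also have "\<dots> = (\<integral>\<^sup>+\<omega>. indicator B (X \<omega>) * (ennreal (p k (X \<omega>)) * (\<integral>\<^sup>+r. (\<Squnion> range U) r \<partial>kap (X \<omega>) k)) \<partial>M)"
  proof (intro nn_integral_cong)
    fix \<omega>
    have "(\<integral>\<^sup>+r. (\<Squnion> range U) r \<partial>kap (X \<omega>) k) = (\<Squnion>i. \<integral>\<^sup>+r. U i r \<partial>kap (X \<omega>) k)"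
      unfolding SUPap using um seq.hyps(3) by (intro nn_integral_monotone_convergence_SUP) auto
    then show "(\<Squnion>i. indicator B (X \<omega>) * (ennreal (p k (X \<omega>)) * (\<integral>\<^sup>+r. U i r \<partial>kap (X \<omega>) k)))
        = indicator B (X \<omega>) * (ennreal (p k (X \<omega>)) * (\<integral>\<^sup>+r. (\<Squnion> range U) r \<partial>kap (X \<omega>) k))"
      by (simp add: SUP_mult_left_ennreal)
  qed
  finally show ?case .
qed


lemma KLce:
  assumes g: "g \<in> borel_measurable borel"
  shows "AE \<omega> in M. ennreal (p k (X \<omega>)) * (\<integral>\<^sup>+r. g r \<partial>kap (X \<omega>) k)
           = nn_cond_exp M F (\<lambda>\<omega>. indicator {\<omega>. A \<omega> = k} \<omega> * g (R \<omega>)) \<omega>"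
proof (rule CE.nn_cond_exp_charact)
  note [measurable] = g GX_F[OF g, of k] GX_M[OF g, of k]
  show "(\<lambda>\<omega>. indicator {\<omega>. A \<omega> = k} \<omega> * g (R \<omega>)) \<in> borel_measurable M" by measurable
  show "(\<lambda>\<omega>. ennreal (p k (X \<omega>)) * (\<integral>\<^sup>+r. g r \<partial>kap (X \<omega>) k)) \<in> borel_measurable F" by measurable
  fix S assume "S \<in> sets F"
  then obtain B where B: "B \<in> sets borel" and S: "S = X -` B \<inter> space M" unfolding sets_F by auto
  have "(\<integral>\<^sup>+ x \<in> S. indicator {\<omega>. A \<omega> = k} x * g (R x) \<partial>M)
      = (\<integral>\<^sup>+\<omega>. indicator B (X \<omega>) * (indicator {\<omega>. A \<omega> = k} \<omega> * g (R \<omega>)) \<partial>M)"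
    unfolding S by (intro nn_integral_cong) (auto simp: indicator_def)
  also have "\<dots> = (\<integral>\<^sup>+\<omega>. indicator B (X \<omega>) * (ennreal (p k (X \<omega>)) * (\<integral>\<^sup>+r. g r \<partial>kap (X \<omega>) k)) \<partial>M)"
    by (rule KL[OF B g])
  also have "\<dots> = (\<integral>\<^sup>+ x \<in> S. ennreal (p k (X x)) * (\<integral>\<^sup>+r. g r \<partial>kap (X x) k) \<partial>M)"
    unfolding S by (intro nn_integral_cong) (auto simp: indicator_def)
  finally show "(\<integral>\<^sup>+ x \<in> S. indicator {\<omega>. A \<omega> = k} x * g (R x) \<partial>M)
      = (\<integral>\<^sup>+ x \<in> S. ennreal (p k (X x)) * (\<integral>\<^sup>+r. g r \<partial>kap (X x) k) \<partial>M)" .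
qed

lemma NCE:
  assumes phi: "\<phi> \<in> borel_measurable borel" and w: "w \<in> borel_measurable F" and w0: "\<And>\<omega>. 0 \<le> w \<omega>"
  shows "AE \<omega> in M. nn_cond_exp M F (\<lambda>\<omega>. ennreal (\<phi> (R \<omega>) * (if A \<omega> = k then 1 else 0) * w \<omega>)) \<omega>
           = ennreal (w \<omega> * p k (X \<omega>)) * (\<integral>\<^sup>+r. ennreal (\<phi> r) \<partial>kap (X \<omega>) k)"
proof -
  note [measurable] = phi w F_to_M[OF w]
  have eq: "(\<lambda>\<omega>. ennreal (\<phi> (R \<omega>) * (if A \<omega> = k then 1 else 0) * w \<omega>))
      = (\<lambda>\<omega>. ennreal (w \<omega>) * (indicator {\<omega>. A \<omega> = k} \<omega> * ennreal (\<phi> (R \<omega>))))"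
    using w0 by (auto simp: indicator_def fun_eq_iff ennreal_mult' mult.commute)
  have gm: "(\<lambda>r. ennreal (\<phi> r)) \<in> borel_measurable borel" by measurable
  have 1: "AE \<omega> in M. ennreal (w \<omega>) * nn_cond_exp M F (\<lambda>\<omega>. indicator {\<omega>. A \<omega> = k} \<omega> * ennreal (\<phi> (R \<omega>))) \<omega>
      = nn_cond_exp M F (\<lambda>\<omega>. ennreal (w \<omega>) * (indicator {\<omega>. A \<omega> = k} \<omega> * ennreal (\<phi> (R \<omega>)))) \<omega>"
    by (rule CE.nn_cond_exp_prod) measurable
  show ?thesis
    using 1 KLce[OF gm, of k] unfolding eq
    by eventually_elim (simp add: ennreal_mult w0 less_imp_le[OF p_pos] mult.assoc)
qed


definition "Gk \<phi> k x = (\<integral>\<^sup>+r. ennreal (\<phi> r) \<partial>kap x k)"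
definition "mk k x = enn2real (Gk (\<lambda>r. r) k x) - enn2real (Gk (\<lambda>r. - r) k x)"
definition "G2 k x = Gk (\<lambda>r. r\<^sup>2) k x"

lemma RCE:
  assumes phi: "\<phi> \<in> borel_measurable borel" and w: "w \<in> borel_measurable F" and w0: "\<And>\<omega>. 0 \<le> w \<omega>"
  shows "AE \<omega> in M. real_cond_exp M F (\<lambda>\<omega>. \<phi> (R \<omega>) * (if A \<omega> = k then 1 else 0) * w \<omega>) \<omega>
           = w \<omega> * p k (X \<omega>) * (enn2real (Gk \<phi> k (X \<omega>)) - enn2real (Gk (\<lambda>r. - \<phi> r) k (X \<omega>)))"
proof -
  have phi2: "(\<lambda>r. - \<phi> r) \<in> borel_measurable borel" using phi by measurable
  have eq: "(\<lambda>\<omega>. ennreal (- (\<phi> (R \<omega>) * (if A \<omega> = k then 1 else 0) * w \<omega>)))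
     = (\<lambda>\<omega>. ennreal (- \<phi> (R \<omega>) * (if A \<omega> = k then 1 else 0) * w \<omega>))" by simp
  show ?thesis
    using NCE[OF phi w w0, of k] NCE[OF phi2 w w0, of k]
    unfolding real_cond_exp_def eq Gk_def
    by eventually_elim (simp add: enn2real_mult w0 less_imp_le[OF p_pos] algebra_simps)
qed

lemma one_over_p_F [measurable]: "(\<lambda>\<omega>. 1 / p k (X \<omega>)) \<in> borel_measurable F"
  by measurable

lemma RY: "AE \<omega> in M. real_cond_exp M F (Y k) \<omega> = mk k (X \<omega>)"
proof -
  have eq: "Y k = (\<lambda>\<omega>. R \<omega> * (if A \<omega> = k then 1 else 0) * (1 / p k (X \<omega>)))"
    unfolding Y_def by auto
  show ?thesis
    using RCE[of "\<lambda>r. r" "\<lambda>\<omega>. 1 / p k (X \<omega>)" k] less_imp_le[OF p_pos]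
    unfolding eq mk_def
    by (auto simp: p_pos less_imp_neq[OF p_pos, symmetric])
qed

lemma RY2: "AE \<omega> in M. real_cond_exp M F (\<lambda>\<eta>. Y k \<eta> * Y k \<eta>) \<omega> = enn2real (G2 k (X \<omega>)) / p k (X \<omega>)"
proof -
  have eq: "(\<lambda>\<eta>. Y k \<eta> * Y k \<eta>) = (\<lambda>\<omega>. (R \<omega>)\<^sup>2 * (if A \<omega> = k then 1 else 0) * (1 / (p k (X \<omega>))\<^sup>2))"
    unfolding Y_def by (auto simp: fun_eq_iff power2_eq_square)
  have z: "Gk (\<lambda>r. - (r\<^sup>2)) k x = 0" for x
    unfolding Gk_def by (simp add: ennreal_neg)
  have m: "(\<lambda>\<omega>. 1 / (p k (X \<omega>))\<^sup>2) \<in> borel_measurable F" by measurable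
  show ?thesis
    using RCE[of "\<lambda>r. r\<^sup>2" "\<lambda>\<omega>. 1 / (p k (X \<omega>))\<^sup>2" k, OF _ m] less_imp_le[OF p_pos]
    unfolding eq G2_def z
    by (auto simp: p_pos less_imp_neq[OF p_pos, symmetric] power2_eq_square)
qed

lemma RYjk:
  assumes "j \<noteq> k"
  shows "AE \<omega> in M. real_cond_exp M F (\<lambda>\<eta>. Y j \<eta> * Y k \<eta>) \<omega> = 0"
proof -
  have eq: "(\<lambda>\<eta>. Y j \<eta> * Y k \<eta>) = (\<lambda>\<omega>. (\<lambda>r. 0::real) (R \<omega>) * (if A \<omega> = k then 1 else 0) * 1)"
    unfolding Y_def using assms by (auto simp: fun_eq_iff)
  show ?thesis
    using RCE[of "\<lambda>r. 0::real" "\<lambda>\<omega>. 1" k]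
    unfolding eq Gk_def by auto
qed


lemma G2_fin: "AE \<omega> in M. G2 k (X \<omega>) \<noteq> \<top>"
proof -
  have one: "(\<lambda>\<omega>. 1::real) \<in> borel_measurable F" by simp
  have r2: "(\<lambda>r::real. r\<^sup>2) \<in> borel_measurable borel" by simp
  note N = NCE[OF r2 one, of k, simplified]
  have gm: "(\<lambda>\<omega>. ennreal ((R \<omega>)\<^sup>2 * (if A \<omega> = k then 1 else 0))) \<in> borel_measurable M"
    using A_set by measurable
  have Gm: "(\<lambda>\<omega>. ennreal (p k (X \<omega>)) * G2 k (X \<omega>)) \<in> borel_measurable M"
    unfolding G2_def Gk_def using GX_M[of "\<lambda>r. ennreal (r\<^sup>2)" k] by measurable
  have "(\<integral>\<^sup>+\<omega>. ennreal (p k (X \<omega>)) * G2 k (X \<omega>) \<partial>M)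
      = (\<integral>\<^sup>+\<omega>. 1 * nn_cond_exp M F (\<lambda>\<omega>. ennreal ((R \<omega>)\<^sup>2 * (if A \<omega> = k then 1 else 0))) \<omega> \<partial>M)"
    using N unfolding G2_def Gk_def by (intro nn_integral_cong_AE) auto
  also have "\<dots> = (\<integral>\<^sup>+\<omega>. 1 * ennreal ((R \<omega>)\<^sup>2 * (if A \<omega> = k then 1 else 0)) \<partial>M)"
    by (rule CE.nn_cond_exp_intg) (use gm in auto)
  also have "\<dots> \<le> (\<integral>\<^sup>+\<omega>. ennreal ((R \<omega>)\<^sup>2) \<partial>M)"
    by (intro nn_integral_mono) auto
  also have "\<dots> = ennreal (\<integral>\<omega>. (R \<omega>)\<^sup>2 \<partial>M)"
    by (rule nn_integral_eq_integral[OF R_sq]) auto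
  also have "\<dots> < \<top>" by simp
  finally have "(\<integral>\<^sup>+\<omega>. ennreal (p k (X \<omega>)) * G2 k (X \<omega>) \<partial>M) \<noteq> \<infinity>" by simp
  note fin = nn_integral_PInf_AE[OF Gm this]
  have pk: "ennreal (p k x) \<noteq> 0" for x using p_pos[of k x] by simp
  from fin show ?thesis by eventually_elim (auto simp: ennreal_mult_eq_top_iff pk)
qed

lemma jensen_kap:
  assumes fin: "G2 k x \<noteq> \<top>"
  shows "mk k x = (\<integral>r. r \<partial>kap x k)" "(mk k x)\<^sup>2 \<le> enn2real (G2 k x)"
proof -
  interpret N: prob_space "kap x k" by (rule kap_prob)
  have eqm: "borel_measurable (kap x k) = (borel_measurable borel :: (real \<Rightarrow> real) set)"
    by (rule measurable_cong_sets[OF kap_sets refl])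
  have mr: "(\<lambda>r::real. r) \<in> borel_measurable (kap x k)" "(\<lambda>r::real. r\<^sup>2) \<in> borel_measurable (kap x k)"
    unfolding eqm by auto
  have i2: "integrable (kap x k) (\<lambda>r. r\<^sup>2)"
    by (rule integrableI_nonneg) (use mr fin in \<open>auto simp: G2_def Gk_def top.not_eq_extremum\<close>)
  have i1: "integrable (kap x k) (\<lambda>r. r)"
    by (rule sq_int_imp_int) (use mr i2 N.finite_measure_axioms in auto)
  show m: "mk k x = (\<integral>r. r \<partial>kap x k)"
    unfolding mk_def Gk_def using real_lebesgue_integral_def[OF i1] by simp
  have e2: "enn2real (G2 k x) = (\<integral>r. r\<^sup>2 \<partial>kap x k)"
    unfolding G2_def Gk_def using mr by (subst integral_eq_nn_integral) auto
  have "0 \<le> N.variance (\<lambda>r. r)" by (rule N.variance_positive)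
  also have "\<dots> = (\<integral>r. r\<^sup>2 \<partial>kap x k) - (\<integral>r. r \<partial>kap x k)\<^sup>2"
    by (rule N.variance_eq) (use i1 i2 in auto)
  finally show "(mk k x)\<^sup>2 \<le> enn2real (G2 k x)" unfolding m e2 by simp
qed


definition "Sig \<omega> = (\<chi> j k. real_cond_exp M F (\<lambda>\<eta>. Y j \<eta> * Y k \<eta>) \<omega>
                 - real_cond_exp M F (Y j) \<omega> * real_cond_exp M F (Y k) \<omega>)"
definition "sv \<omega> = (\<chi> j. enn2real (G2 j (X \<omega>)) / p j (X \<omega>))"
definition "rv \<omega> = (\<chi> j. mk j (X \<omega>))"

lemma AE_all_d: "(\<And>j::'d. AE \<omega> in M. Q j \<omega>) \<Longrightarrow> AE \<omega> in M. \<forall>j. Q j \<omega>"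
  using AE_finite_allI[of "UNIV::'d set" Q M] by simp

lemma Sig_AE: "AE \<omega> in M. Sig \<omega> = (\<chi> j k. (if j = k then sv \<omega> $ j else 0) - rv \<omega> $ j * rv \<omega> $ k)"
proof -
  have 1: "AE \<omega> in M. \<forall>j. real_cond_exp M F (Y j) \<omega> = mk j (X \<omega>)"
    by (rule AE_all_d) (rule RY)
  have 2: "AE \<omega> in M. \<forall>j. real_cond_exp M F (\<lambda>\<eta>. Y j \<eta> * Y j \<eta>) \<omega> = enn2real (G2 j (X \<omega>)) / p j (X \<omega>)"
    by (rule AE_all_d) (rule RY2)
  have 3: "AE \<omega> in M. \<forall>j. \<forall>k. j \<noteq> k \<longrightarrow> real_cond_exp M F (\<lambda>\<eta>. Y j \<eta> * Y k \<eta>) \<omega> = 0"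
  proof (rule AE_all_d, rule AE_all_d)
    fix j k :: 'd
    show "AE \<omega> in M. j \<noteq> k \<longrightarrow> real_cond_exp M F (\<lambda>\<eta>. Y j \<eta> * Y k \<eta>) \<omega> = 0"
      by (cases "j = k") (auto intro: RYjk)
  qed
  from 1 2 3 show ?thesis
    by eventually_elim (auto simp: Sig_def sv_def rv_def vec_eq_iff)
qed

lemma rv_le: "AE \<omega> in M. \<forall>j. (rv \<omega> $ j)\<^sup>2 \<le> p j (X \<omega>) * sv \<omega> $ j"
proof (rule AE_all_d)
  fix j
  from G2_fin[of j] show "AE \<omega> in M. (rv \<omega> $ j)\<^sup>2 \<le> p j (X \<omega>) * sv \<omega> $ j"
  proof eventually_elim
    case (elim \<omega>)
    then show ?case using jensen_kap(2)[OF elim] p_pos[of j "X \<omega>"]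
      by (simp add: rv_def sv_def)
  qed
qed

lemma rv_mean: "AE \<omega> in M. \<forall>j. rv \<omega> $ j = (\<integral>r. r \<partial>kap (X \<omega>) j)"
proof (rule AE_all_d)
  fix j
  from G2_fin[of j] show "AE \<omega> in M. rv \<omega> $ j = (\<integral>r. r \<partial>kap (X \<omega>) j)"
    by eventually_elim (simp add: rv_def jensen_kap(1))
qed

lemma sv_nonneg: "0 \<le> sv \<omega> $ j"
  unfolding sv_def using p_pos[of j] by (simp add: less_imp_le)


lemma ifA_meas [measurable]: "(\<lambda>\<omega>. if A \<omega> = k then 1 else (0::real)) \<in> borel_measurable M"
proof -
  have "(\<lambda>\<omega>. if A \<omega> = k then 1 else (0::real)) = (\<lambda>\<omega>. indicator {\<omega>. A \<omega> = k} \<omega>)"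
    by (auto simp: indicator_def)
  then show ?thesis by simp
qed

lemma Y_meas [measurable]: "Y k \<in> borel_measurable M"
  unfolding Y_def by measurable

lemma Y_zero: "a \<noteq> A \<omega> \<Longrightarrow> Y a \<omega> = 0"
  unfolding Y_def by auto

lemma sumY: "(\<Sum>a\<in>UNIV. c a \<omega> * Y a \<omega>) = c (A \<omega>) \<omega> * Y (A \<omega>) \<omega>"
proof -
  have "(\<Sum>a\<in>UNIV. c a \<omega> * Y a \<omega>) = (\<Sum>a\<in>UNIV. if a = A \<omega> then c (A \<omega>) \<omega> * Y (A \<omega>) \<omega> else 0)"
    by (intro sum.cong) (auto simp: Y_zero)
  then show ?thesis by simp
qed

lemma sqY: "(\<Sum>a\<in>UNIV. c a \<omega> * Y a \<omega>)\<^sup>2 = (\<Sum>a\<in>UNIV. (c a \<omega>)\<^sup>2 * (Y a \<omega>)\<^sup>2)"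
proof -
  have "(\<Sum>a\<in>UNIV. (c a \<omega>)\<^sup>2 * (Y a \<omega>)\<^sup>2) = (\<Sum>a\<in>UNIV. if a = A \<omega> then (c (A \<omega>) \<omega>)\<^sup>2 * (Y (A \<omega>) \<omega>)\<^sup>2 else 0)"
    by (intro sum.cong) (auto simp: Y_zero)
  then show ?thesis by (simp add: sumY power_mult_distrib)
qed

lemma nce_Y2: "AE \<omega> in M. nn_cond_exp M F (\<lambda>\<omega>. ennreal ((Y a \<omega>)\<^sup>2)) \<omega> = ennreal (sv \<omega> $ a)"
proof -
  have eq: "(\<lambda>\<omega>. ennreal ((Y a \<omega>)\<^sup>2)) = (\<lambda>\<omega>. ennreal ((R \<omega>)\<^sup>2 * (if A \<omega> = a then 1 else 0) * (1 / (p a (X \<omega>))\<^sup>2)))"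
    unfolding Y_def by (auto simp: fun_eq_iff power2_eq_square)
  have m: "(\<lambda>\<omega>. 1 / (p a (X \<omega>))\<^sup>2) \<in> borel_measurable F" by measurable
  have r2: "(\<lambda>r::real. r\<^sup>2) \<in> borel_measurable borel" by simp
  have w0: "\<And>\<omega>. 0 \<le> 1 / (p a (X \<omega>))\<^sup>2" by simp
  from NCE[OF r2 m w0, of a] G2_fin[of a]
  show ?thesis unfolding eq
  proof eventually_elim
    case (elim \<omega>)
    have pp: "0 < p a (X \<omega>)" by (rule p_pos)
    have "ennreal (1 / (p a (X \<omega>))\<^sup>2 * p a (X \<omega>)) * Gk (\<lambda>r. r\<^sup>2) a (X \<omega>)
        = ennreal (1 / p a (X \<omega>)) * ennreal (enn2real (G2 a (X \<omega>)))"
      using elim(2) pp by (simp add: G2_def power2_eq_square ennreal_enn2real less_top[symmetric])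
    also have "\<dots> = ennreal (sv \<omega> $ a)"
      using pp by (simp add: sv_def ennreal_mult[symmetric] divide_simps)
    finally show ?case using elim(1) unfolding Gk_def by simp
  qed
qed

lemma sv_meas [measurable]: "(\<lambda>\<omega>. sv \<omega> $ a) \<in> borel_measurable M"
proof -
  note [measurable] = GX_M[of "\<lambda>r. ennreal (r\<^sup>2)" a]
  show ?thesis unfolding sv_def G2_def Gk_def vec_lambda_beta by measurable
qed

lemma rv_meas [measurable]: "(\<lambda>\<omega>. rv \<omega> $ a) \<in> borel_measurable M"
proof -
  note [measurable] = GX_M[of "\<lambda>r. ennreal r" a] GX_M[of "\<lambda>r. ennreal (- r)" a]
  show ?thesis unfolding rv_def mk_def Gk_def vec_lambda_beta by measurable
qed

lemma G1:
  assumes cF: "\<And>a. c a \<in> borel_measurable F"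
  shows "(\<integral>\<^sup>+\<omega>. ennreal ((\<Sum>a\<in>UNIV. c a \<omega> * Y a \<omega>)\<^sup>2) \<partial>M)
       = (\<integral>\<^sup>+\<omega>. ennreal (\<Sum>a\<in>UNIV. (c a \<omega>)\<^sup>2 * sv \<omega> $ a) \<partial>M)"
proof -
  have cM [measurable]: "c a \<in> borel_measurable M" for a by (rule F_to_M[OF cF])
  note [measurable] = cF
  have "(\<integral>\<^sup>+\<omega>. ennreal ((\<Sum>a\<in>UNIV. c a \<omega> * Y a \<omega>)\<^sup>2) \<partial>M)
      = (\<integral>\<^sup>+\<omega>. (\<Sum>a\<in>UNIV. ennreal ((c a \<omega>)\<^sup>2) * ennreal ((Y a \<omega>)\<^sup>2)) \<partial>M)"
    by (intro nn_integral_cong) (simp add: sqY sum_ennreal[symmetric] ennreal_mult)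
  also have "\<dots> = (\<Sum>a\<in>UNIV. (\<integral>\<^sup>+\<omega>. ennreal ((c a \<omega>)\<^sup>2) * ennreal ((Y a \<omega>)\<^sup>2) \<partial>M))"
    by (rule nn_integral_sum) measurable
  also have "\<dots> = (\<Sum>a\<in>UNIV. (\<integral>\<^sup>+\<omega>. ennreal ((c a \<omega>)\<^sup>2) * ennreal (sv \<omega> $ a) \<partial>M))"
  proof (rule sum.cong[OF refl])
    fix a
    have "(\<integral>\<^sup>+\<omega>. ennreal ((c a \<omega>)\<^sup>2) * ennreal ((Y a \<omega>)\<^sup>2) \<partial>M)
        = (\<integral>\<^sup>+\<omega>. ennreal ((c a \<omega>)\<^sup>2) * nn_cond_exp M F (\<lambda>\<omega>. ennreal ((Y a \<omega>)\<^sup>2)) \<omega> \<partial>M)"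
      by (rule CE.nn_cond_exp_intg[symmetric]) measurable
    also have "\<dots> = (\<integral>\<^sup>+\<omega>. ennreal ((c a \<omega>)\<^sup>2) * ennreal (sv \<omega> $ a) \<partial>M)"
      using nce_Y2[of a] by (intro nn_integral_cong_AE) auto
    finally show "(\<integral>\<^sup>+\<omega>. ennreal ((c a \<omega>)\<^sup>2) * ennreal ((Y a \<omega>)\<^sup>2) \<partial>M)
        = (\<integral>\<^sup>+\<omega>. ennreal ((c a \<omega>)\<^sup>2) * ennreal (sv \<omega> $ a) \<partial>M)" .
  qed
  also have "\<dots> = (\<integral>\<^sup>+\<omega>. (\<Sum>a\<in>UNIV. ennreal ((c a \<omega>)\<^sup>2) * ennreal (sv \<omega> $ a)) \<partial>M)"
  proof (rule nn_integral_sum[symmetric])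
    fix a
    have "(\<lambda>\<omega>. sv \<omega> $ a) \<in> borel_measurable M" by (rule sv_meas)
    then show "(\<lambda>\<omega>. ennreal ((c a \<omega>)\<^sup>2) * ennreal (sv \<omega> $ a)) \<in> borel_measurable M" by measurable
  qed
  also have "\<dots> = (\<integral>\<^sup>+\<omega>. ennreal (\<Sum>a\<in>UNIV. (c a \<omega>)\<^sup>2 * sv \<omega> $ a) \<partial>M)"
    by (intro nn_integral_cong) (simp add: sum_ennreal[symmetric] ennreal_mult sv_nonneg)
  finally show ?thesis .
qed


lemma G_mean:
  assumes cF: "\<And>a. c a \<in> borel_measurable F"
    and sq: "integrable M (\<lambda>\<omega>. (\<Sum>a\<in>UNIV. c a \<omega> * Y a \<omega>)\<^sup>2)"
  shows "integrable M (\<lambda>\<omega>. \<Sum>a\<in>UNIV. c a \<omega> * Y a \<omega>)"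
    and "integrable M (\<lambda>\<omega>. \<Sum>a\<in>UNIV. c a \<omega> * rv \<omega> $ a)"
    and "(\<integral>\<omega>. (\<Sum>a\<in>UNIV. c a \<omega> * Y a \<omega>) \<partial>M) = (\<integral>\<omega>. (\<Sum>a\<in>UNIV. c a \<omega> * rv \<omega> $ a) \<partial>M)"
proof -
  have cM [measurable]: "c a \<in> borel_measurable M" for a by (rule F_to_M[OF cF])
  have sm: "(\<lambda>\<omega>. \<Sum>a\<in>UNIV. c a \<omega> * Y a \<omega>) \<in> borel_measurable M" by measurable
  show i0: "integrable M (\<lambda>\<omega>. \<Sum>a\<in>UNIV. c a \<omega> * Y a \<omega>)"
    by (rule sq_int_imp_int[OF P.finite_measure_axioms sm sq])
  have ia: "integrable M (\<lambda>\<omega>. c a \<omega> * Y a \<omega>)" for a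
  proof (rule Bochner_Integration.integrable_bound[OF i0])
    show "(\<lambda>\<omega>. c a \<omega> * Y a \<omega>) \<in> borel_measurable M" by measurable
    show "AE \<omega> in M. norm (c a \<omega> * Y a \<omega>) \<le> norm (\<Sum>a\<in>UNIV. c a \<omega> * Y a \<omega>)"
    proof (rule always_eventually, intro allI)
      fix \<omega>
      show "norm (c a \<omega> * Y a \<omega>) \<le> norm (\<Sum>a\<in>UNIV. c a \<omega> * Y a \<omega>)"
        by (cases "a = A \<omega>") (auto simp: sumY Y_zero)
    qed
  qed
  have ae: "AE \<omega> in M. c a \<omega> * real_cond_exp M F (Y a) \<omega> = c a \<omega> * rv \<omega> $ a" for a
    using RY[of a] by eventually_elim (simp add: rv_def)
  have ib: "integrable M (\<lambda>\<omega>. c a \<omega> * rv \<omega> $ a)" for a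
  proof -
    have "integrable M (\<lambda>\<omega>. c a \<omega> * real_cond_exp M F (Y a) \<omega>)"
      by (rule CE.real_cond_exp_intg(1)[OF ia cF Y_meas])
    then show ?thesis using ae[of a] by (subst integrable_cong_AE[symmetric]) (auto intro: borel_measurable_cond_exp2)
  qed
  have eq: "(\<integral>\<omega>. c a \<omega> * Y a \<omega> \<partial>M) = (\<integral>\<omega>. c a \<omega> * rv \<omega> $ a \<partial>M)" for a
  proof -
    have "(\<integral>\<omega>. c a \<omega> * Y a \<omega> \<partial>M) = (\<integral>\<omega>. c a \<omega> * real_cond_exp M F (Y a) \<omega> \<partial>M)"
      by (rule CE.real_cond_exp_intg(2)[OF ia cF Y_meas, symmetric])
    also have "\<dots> = (\<integral>\<omega>. c a \<omega> * rv \<omega> $ a \<partial>M)"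
      using ae[of a] by (intro integral_cong_AE) auto
    finally show ?thesis .
  qed
  show "integrable M (\<lambda>\<omega>. \<Sum>a\<in>UNIV. c a \<omega> * rv \<omega> $ a)" using ib by auto
  show "(\<integral>\<omega>. (\<Sum>a\<in>UNIV. c a \<omega> * Y a \<omega>) \<partial>M) = (\<integral>\<omega>. (\<Sum>a\<in>UNIV. c a \<omega> * rv \<omega> $ a) \<partial>M)"
    using ia ib eq by (simp add: integral_sum)
qed


lemma Sig_cm: "cm F Sig"
  unfolding cm_def Sig_def by simp

lemma pol_F:
  assumes polm: "pol \<in> borel \<rightarrow>\<^sub>M count_space UNIV"
  shows "(\<lambda>\<omega>. if pol (X \<omega>) = b then 1 else (0::real)) \<in> borel_measurable F"
proof -
  have s: "pol -` {b} \<in> sets borel"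
    using measurable_sets[OF polm, of "{b}"] by simp
  have "(\<lambda>\<omega>. if pol (X \<omega>) = b then 1 else (0::real)) = (\<lambda>\<omega>. indicator (pol -` {b}) (X \<omega>))"
    by (auto simp: indicator_def)
  then show ?thesis using s X_F by simp
qed

lemma cK_F:
  fixes D :: "real^'m^'d"
  assumes polm: "pol \<in> borel \<rightarrow>\<^sub>M count_space UNIV"
  shows "(\<lambda>\<omega>. (kernel_matrix (Sig \<omega>) D *v axis (pol (X \<omega>)) 1) $ a) \<in> borel_measurable F"
proof -
  have cmK: "cm F (\<lambda>\<omega>. kernel_matrix (Sig \<omega>) D)" by (rule cm_kernel[OF Sig_cm])
  have eq: "(\<lambda>\<omega>. (kernel_matrix (Sig \<omega>) D *v axis (pol (X \<omega>)) 1) $ a)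
     = (\<lambda>\<omega>. \<Sum>b\<in>UNIV. (if pol (X \<omega>) = b then 1 else 0) * kernel_matrix (Sig \<omega>) D $ a $ b)"
    by (auto simp: fun_eq_iff matrix_vector_mult_basis column_def if_distrib[of "\<lambda>x. x * _"] cong: if_cong)
  show ?thesis unfolding eq
    using cmD[OF cmK] pol_F[OF polm] by (intro borel_measurable_sum borel_measurable_times) auto
qed

lemma per_i:
  fixes D :: "real^'m^'d" and \<beta> :: "'w \<Rightarrow> real^'m" and pol :: "'x \<Rightarrow> 'd"
  assumes rk: "rank D = CARD('m)"
    and reg: "AE \<omega> in M. rv \<omega> = D *v \<beta> \<omega>"
    and Sinv: "AE \<omega> in M. invertible (Sig \<omega>)"
    and polm: "pol \<in> borel \<rightarrow>\<^sub>M count_space UNIV"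
  defines "TK \<equiv> \<lambda>\<omega>. R \<omega> * (axis (A \<omega>) 1 \<bullet> (kernel_matrix (Sig \<omega>) D *v axis (pol (X \<omega>)) 1)) / p (A \<omega>) (X \<omega>)"
    and "TI \<equiv> \<lambda>\<omega>. R \<omega> * (if A \<omega> = pol (X \<omega>) then 1 else 0) / p (A \<omega>) (X \<omega>)"
  shows "integrable M (\<lambda>\<omega>. (TK \<omega>)\<^sup>2)" "integrable M (\<lambda>\<omega>. (TI \<omega>)\<^sup>2)"
    "(\<integral>\<omega>. TK \<omega> \<partial>M) = (\<integral>\<omega>. TI \<omega> \<partial>M)"
    "(\<integral>\<omega>. (TK \<omega>)\<^sup>2 \<partial>M) \<le> (\<integral>\<omega>. (TI \<omega>)\<^sup>2 \<partial>M)"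
proof -
  define cK where "cK a \<omega> = (kernel_matrix (Sig \<omega>) D *v axis (pol (X \<omega>)) 1) $ a" for a \<omega>
  define cI where "cI a \<omega> = (if pol (X \<omega>) = a then 1 else (0::real))" for a \<omega>
  have cKF: "cK a \<in> borel_measurable F" for a unfolding cK_def by (rule cK_F[OF polm])
  have cIF: "cI a \<in> borel_measurable F" for a unfolding cI_def by (rule pol_F[OF polm])
  have TK_eq: "TK = (\<lambda>\<omega>. \<Sum>a\<in>UNIV. cK a \<omega> * Y a \<omega>)"
  proof (rule ext)
    fix \<omega>
    show "TK \<omega> = (\<Sum>a\<in>UNIV. cK a \<omega> * Y a \<omega>)"
      unfolding sumY by (simp add: TK_def cK_def Y_def inner_axis inner_commute[of "axis _ _"])
  qed
  have TI_eq: "TI = (\<lambda>\<omega>. \<Sum>a\<in>UNIV. cI a \<omega> * Y a \<omega>)"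
  proof (rule ext)
    fix \<omega>
    show "TI \<omega> = (\<Sum>a\<in>UNIV. cI a \<omega> * Y a \<omega>)"
      unfolding sumY by (simp add: TI_def cI_def Y_def)
  qed
  have ptw: "AE \<omega> in M. (\<Sum>a\<in>UNIV. (cK a \<omega>)\<^sup>2 * sv \<omega> $ a) \<le> (\<Sum>a\<in>UNIV. (cI a \<omega>)\<^sup>2 * sv \<omega> $ a)
       \<and> (\<Sum>a\<in>UNIV. cK a \<omega> * rv \<omega> $ a) = (\<Sum>a\<in>UNIV. cI a \<omega> * rv \<omega> $ a)"
    using Sig_AE rv_le reg Sinv
  proof eventually_elim
    case (elim \<omega>)
    have pp: "\<And>j. 0 < p j (X \<omega>)" by (rule p_pos)
    have ps: "(\<Sum>j\<in>UNIV. p j (X \<omega>)) = 1" by (rule p_sum)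
    note ki = kernel_ineq[OF pp ps _ elim(1) elim(4) elim(3) rk, of "pol (X \<omega>)"]
    have le: "\<And>j. (rv \<omega> $ j)\<^sup>2 \<le> p j (X \<omega>) * sv \<omega> $ j" using elim(2) by blast
    have cvec: "kernel_matrix (Sig \<omega>) D *v axis (pol (X \<omega>)) 1 = (\<chi> a. cK a \<omega>)"
      unfolding cK_def by (simp add: vec_eq_iff)
    have s1: "(\<Sum>a\<in>UNIV. (cI a \<omega>)\<^sup>2 * sv \<omega> $ a) = sv \<omega> $ pol (X \<omega>)"
      unfolding cI_def by (simp add: if_distrib[of "\<lambda>x. x\<^sup>2 * _"] cong: if_cong)
    have s2: "(\<Sum>a\<in>UNIV. cI a \<omega> * rv \<omega> $ a) = rv \<omega> $ pol (X \<omega>)"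
      unfolding cI_def by (simp add: if_distrib[of "\<lambda>x. x * _"] cong: if_cong)
    show ?case using ki(1)[OF le] ki(2)[OF le] unfolding cvec s1 s2
      by (simp add: inner_vec_def)
  qed
  have F1: "(\<integral>\<^sup>+\<omega>. ennreal ((TK \<omega>)\<^sup>2) \<partial>M) \<le> (\<integral>\<^sup>+\<omega>. ennreal ((TI \<omega>)\<^sup>2) \<partial>M)"
  proof -
    have "(\<integral>\<^sup>+\<omega>. ennreal ((TK \<omega>)\<^sup>2) \<partial>M) = (\<integral>\<^sup>+\<omega>. ennreal (\<Sum>a\<in>UNIV. (cK a \<omega>)\<^sup>2 * sv \<omega> $ a) \<partial>M)"
      unfolding TK_eq by (rule G1[OF cKF])
    also have "\<dots> \<le> (\<integral>\<^sup>+\<omega>. ennreal (\<Sum>a\<in>UNIV. (cI a \<omega>)\<^sup>2 * sv \<omega> $ a) \<partial>M)"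
      using ptw by (intro nn_integral_mono_AE) (auto intro: ennreal_leI)
    also have "\<dots> = (\<integral>\<^sup>+\<omega>. ennreal ((TI \<omega>)\<^sup>2) \<partial>M)"
      unfolding TI_eq by (rule G1[OF cIF, symmetric])
    finally show ?thesis .
  qed
  have cKM [measurable]: "cK a \<in> borel_measurable M" for a by (rule F_to_M[OF cKF])
  have cIM [measurable]: "cI a \<in> borel_measurable M" for a by (rule F_to_M[OF cIF])
  have TKm: "(\<lambda>\<omega>. (TK \<omega>)\<^sup>2) \<in> borel_measurable M" unfolding TK_eq by measurable
  have TIm: "(\<lambda>\<omega>. (TI \<omega>)\<^sup>2) \<in> borel_measurable M" unfolding TI_eq by measurable
  have Ysq: "integrable M (\<lambda>\<omega>. (Y a \<omega>)\<^sup>2)" for a using Y_sq[of a] unfolding Y_def .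
  show iI: "integrable M (\<lambda>\<omega>. (TI \<omega>)\<^sup>2)"
  proof (rule Bochner_Integration.integrable_bound[of _ "\<lambda>\<omega>. \<Sum>a\<in>UNIV. (Y a \<omega>)\<^sup>2"])
    show "integrable M (\<lambda>\<omega>. \<Sum>a\<in>UNIV. (Y a \<omega>)\<^sup>2)" using Ysq by auto
    show "(\<lambda>\<omega>. (TI \<omega>)\<^sup>2) \<in> borel_measurable M" by (rule TIm)
    show "AE \<omega> in M. norm ((TI \<omega>)\<^sup>2) \<le> norm (\<Sum>a\<in>UNIV. (Y a \<omega>)\<^sup>2)"
    proof (rule always_eventually, intro allI)
      fix \<omega>
      have "(TI \<omega>)\<^sup>2 = (\<Sum>a\<in>UNIV. (cI a \<omega>)\<^sup>2 * (Y a \<omega>)\<^sup>2)" unfolding TI_eq by (rule sqY)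
      also have "\<dots> \<le> (\<Sum>a\<in>UNIV. (Y a \<omega>)\<^sup>2)"
        by (intro sum_mono) (auto simp: cI_def)
      finally show "norm ((TI \<omega>)\<^sup>2) \<le> norm (\<Sum>a\<in>UNIV. (Y a \<omega>)\<^sup>2)"
        by (simp add: sum_nonneg)
    qed
  qed
  have finI: "(\<integral>\<^sup>+\<omega>. ennreal ((TI \<omega>)\<^sup>2) \<partial>M) = ennreal (\<integral>\<omega>. (TI \<omega>)\<^sup>2 \<partial>M)"
    by (rule nn_integral_eq_integral[OF iI]) auto
  show iK: "integrable M (\<lambda>\<omega>. (TK \<omega>)\<^sup>2)"
  proof (rule integrableI_nonneg[OF TKm])
    show "AE x in M. 0 \<le> (TK x)\<^sup>2" by simp
    have "(\<integral>\<^sup>+\<omega>. ennreal ((TK \<omega>)\<^sup>2) \<partial>M) \<le> ennreal (\<integral>\<omega>. (TI \<omega>)\<^sup>2 \<partial>M)"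
      using F1 finI by simp
    also have "\<dots> < \<infinity>" by simp
    finally show "(\<integral>\<^sup>+\<omega>. ennreal ((TK \<omega>)\<^sup>2) \<partial>M) < \<infinity>" .
  qed
  have finK: "(\<integral>\<^sup>+\<omega>. ennreal ((TK \<omega>)\<^sup>2) \<partial>M) = ennreal (\<integral>\<omega>. (TK \<omega>)\<^sup>2 \<partial>M)"
    by (rule nn_integral_eq_integral[OF iK]) auto
  show "(\<integral>\<omega>. (TK \<omega>)\<^sup>2 \<partial>M) \<le> (\<integral>\<omega>. (TI \<omega>)\<^sup>2 \<partial>M)"
    using F1 unfolding finK finI by (simp add: ennreal_le_iff integral_nonneg_AE)
  have mK: "(\<integral>\<omega>. TK \<omega> \<partial>M) = (\<integral>\<omega>. (\<Sum>a\<in>UNIV. cK a \<omega> * rv \<omega> $ a) \<partial>M)"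
    using G_mean(3)[OF cKF] iK unfolding TK_eq by simp
  have mI: "(\<integral>\<omega>. TI \<omega> \<partial>M) = (\<integral>\<omega>. (\<Sum>a\<in>UNIV. cI a \<omega> * rv \<omega> $ a) \<partial>M)"
    using G_mean(3)[OF cIF] iI unfolding TI_eq by simp
  have "(\<integral>\<omega>. (\<Sum>a\<in>UNIV. cK a \<omega> * rv \<omega> $ a) \<partial>M) = (\<integral>\<omega>. (\<Sum>a\<in>UNIV. cI a \<omega> * rv \<omega> $ a) \<partial>M)"
    using ptw by (intro integral_cong_AE) auto
  then show "(\<integral>\<omega>. TK \<omega> \<partial>M) = (\<integral>\<omega>. TI \<omega> \<partial>M)" using mK mI by simp
qed


lemma TK_G:
  fixes D :: "real^'m^'d" and G :: "'w measure" and pol :: "'x \<Rightarrow> 'd"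
  assumes sG: "space G = space M" and XG: "X \<in> G \<rightarrow>\<^sub>M borel"
    and AG: "A \<in> G \<rightarrow>\<^sub>M count_space UNIV" and RG: "R \<in> G \<rightarrow>\<^sub>M borel"
    and polm: "pol \<in> borel \<rightarrow>\<^sub>M count_space UNIV"
  shows "(\<lambda>\<omega>. R \<omega> * (axis (A \<omega>) 1 \<bullet> (kernel_matrix (Sig \<omega>) D *v axis (pol (X \<omega>)) 1)) / p (A \<omega>) (X \<omega>)) \<in> borel_measurable G"
    and "(\<lambda>\<omega>. R \<omega> * (if A \<omega> = pol (X \<omega>) then 1 else 0) / p (A \<omega>) (X \<omega>)) \<in> borel_measurable G"
proof -
  have subGF: "subalgebra G F"
    unfolding subalgebra_def
  proof
    show "sets F \<subseteq> sets G"
    proof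
      fix S assume "S \<in> sets F"
      then obtain B where B: "B \<in> sets borel" and S: "S = X -` B \<inter> space M" unfolding sets_F by auto
      show "S \<in> sets G" unfolding S sG[symmetric] by (rule measurable_sets[OF XG B])
    qed
    show "space F = space G" using space_F sG by simp
  qed
  define cK where "cK a \<omega> = (kernel_matrix (Sig \<omega>) D *v axis (pol (X \<omega>)) 1) $ a" for a \<omega>
  define cI where "cI a \<omega> = (if pol (X \<omega>) = a then 1 else (0::real))" for a \<omega>
  have cKG [measurable]: "cK a \<in> borel_measurable G" for a
    unfolding cK_def by (rule measurable_from_subalg[OF subGF cK_F[OF polm]])
  have cIG [measurable]: "cI a \<in> borel_measurable G" for a
    unfolding cI_def by (rule measurable_from_subalg[OF subGF pol_F[OF polm]])
  have indG: "(\<lambda>\<omega>. if A \<omega> = a then 1 else (0::real)) \<in> borel_measurable G" for a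
  proof -
    have "(\<lambda>x::'d. if x = a then 1 else (0::real)) \<in> borel_measurable (count_space UNIV)" by simp
    from measurable_compose[OF AG this] show ?thesis by simp
  qed
  have pG: "(\<lambda>\<omega>. p a (X \<omega>)) \<in> borel_measurable G" for a
    using measurable_compose[OF XG p_meas[of a]] by simp
  have YG [measurable]: "Y a \<in> borel_measurable G" for a
    unfolding Y_def using RG indG[of a] pG[of a] by measurable
  have TK_eq: "(\<lambda>\<omega>. R \<omega> * (axis (A \<omega>) 1 \<bullet> (kernel_matrix (Sig \<omega>) D *v axis (pol (X \<omega>)) 1)) / p (A \<omega>) (X \<omega>))
      = (\<lambda>\<omega>. \<Sum>a\<in>UNIV. cK a \<omega> * Y a \<omega>)"
  proof (rule ext)
    fix \<omega>
    show "R \<omega> * (axis (A \<omega>) 1 \<bullet> (kernel_matrix (Sig \<omega>) D *v axis (pol (X \<omega>)) 1)) / p (A \<omega>) (X \<omega>) = (\<Sum>a\<in>UNIV. cK a \<omega> * Y a \<omega>)"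
      unfolding sumY by (simp add: cK_def Y_def inner_axis inner_commute[of "axis _ _"])
  qed
  have TI_eq: "(\<lambda>\<omega>. R \<omega> * (if A \<omega> = pol (X \<omega>) then 1 else 0) / p (A \<omega>) (X \<omega>))
      = (\<lambda>\<omega>. \<Sum>a\<in>UNIV. cI a \<omega> * Y a \<omega>)"
  proof (rule ext)
    fix \<omega>
    show "R \<omega> * (if A \<omega> = pol (X \<omega>) then 1 else 0) / p (A \<omega>) (X \<omega>) = (\<Sum>a\<in>UNIV. cI a \<omega> * Y a \<omega>)"
      unfolding sumY by (simp add: cI_def Y_def)
  qed
  show "(\<lambda>\<omega>. R \<omega> * (axis (A \<omega>) 1 \<bullet> (kernel_matrix (Sig \<omega>) D *v axis (pol (X \<omega>)) 1)) / p (A \<omega>) (X \<omega>)) \<in> borel_measurable G"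
    unfolding TK_eq by measurable
  show "(\<lambda>\<omega>. R \<omega> * (if A \<omega> = pol (X \<omega>) then 1 else 0) / p (A \<omega>) (X \<omega>)) \<in> borel_measurable G"
    unfolding TI_eq by measurable
qed

end

lemma (in prob_space) indep_from_tuple:
  assumes ind: "indep_vars N Z I"
    and TG: "\<And>i. i \<in> I \<Longrightarrow> T i \<in> borel_measurable (vimage_algebra (space M) (Z i) (N i))"
  shows "indep_vars (\<lambda>_. borel) T I"
proof -
  have Zm: "i \<in> I \<Longrightarrow> Z i \<in> M \<rightarrow>\<^sub>M N i" for i using ind unfolding indep_vars_def2 by simp
  have Zsp: "i \<in> I \<Longrightarrow> Z i \<in> space M \<rightarrow> space (N i)" for i using Zm[of i] by (simp add: measurable_def)
  have sets_sub: "i \<in> I \<Longrightarrow> sets (vimage_algebra (space M) (Z i) (N i)) \<subseteq> sets M" for i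
  proof -
    assume i: "i \<in> I"
    show ?thesis unfolding sets_vimage_algebra2[OF Zsp[OF i]]
      using measurable_sets[OF Zm[OF i]] by blast
  qed
  have subalg: "i \<in> I \<Longrightarrow> subalgebra M (vimage_algebra (space M) (Z i) (N i))" for i
    using sets_sub by (simp add: subalgebra_def)
  have Tm: "i \<in> I \<Longrightarrow> T i \<in> borel_measurable M" for i
  proof -
    assume i: "i \<in> I"
    show ?thesis by (rule measurable_from_subalg[OF subalg[OF i] TG[OF i]])
  qed
  have "indep_sets (\<lambda>i. {Z i -` A \<inter> space M | A. A \<in> sets (N i)}) I"
    using ind unfolding indep_vars_def2 by blast
  then have "indep_sets (\<lambda>i. {T i -` A \<inter> space M | A. A \<in> sets borel}) I"
  proof (rule indep_sets_mono_sets)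
    fix i assume i: "i \<in> I"
    show "{T i -` A \<inter> space M | A. A \<in> sets borel} \<subseteq> {Z i -` A \<inter> space M | A. A \<in> sets (N i)}"
    proof
      fix S assume "S \<in> {T i -` A \<inter> space M | A. A \<in> sets borel}"
      then obtain B where B: "B \<in> sets borel" and S: "S = T i -` B \<inter> space M" by auto
      have "T i -` B \<inter> space (vimage_algebra (space M) (Z i) (N i)) \<in> sets (vimage_algebra (space M) (Z i) (N i))"
        by (rule measurable_sets[OF TG[OF i] B])
      then show "S \<in> {Z i -` A \<inter> space M | A. A \<in> sets (N i)}"
        unfolding S using Zsp[OF i] by (simp add: sets_vimage_algebra2)
    qed
  qed
  then show ?thesis unfolding indep_vars_def2 using Tm by blast
qed

lemma (in prob_space) var_sum_indep:
  fixes T :: "'i \<Rightarrow> 'a \<Rightarrow> real"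
  assumes fin: "finite I" and ind: "indep_vars (\<lambda>_. borel) T I"
    and sq: "\<And>i. i \<in> I \<Longrightarrow> integrable M (\<lambda>\<omega>. (T i \<omega>)\<^sup>2)"
  shows "variance (\<lambda>\<omega>. c * (\<Sum>i\<in>I. T i \<omega>))
       = c\<^sup>2 * (\<Sum>i\<in>I. expectation (\<lambda>\<omega>. (T i \<omega>)\<^sup>2) - (expectation (T i))\<^sup>2)"
proof -
  have Tm: "i \<in> I \<Longrightarrow> T i \<in> borel_measurable M" for i using ind unfolding indep_vars_def2 by blast
  have i1: "i \<in> I \<Longrightarrow> integrable M (T i)" for i
    by (rule sq_int_imp_int[OF finite_measure_axioms Tm sq])
  have pr: "integrable M (\<lambda>\<omega>. T i \<omega> * T k \<omega>) \<and>
      expectation (\<lambda>\<omega>. T i \<omega> * T k \<omega>) = expectation (T i) * expectation (T k)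
        + (if i = k then expectation (\<lambda>\<omega>. (T i \<omega>)\<^sup>2) - (expectation (T i))\<^sup>2 else 0)"
    if i: "i \<in> I" and k: "k \<in> I" for i k
  proof (cases "i = k")
    case True
    then show ?thesis using sq[OF i] by (simp add: power2_eq_square)
  next
    case False
    have ik: "indep_vars (\<lambda>_. borel) T {i, k}" using indep_vars_subset[OF ind] i k by auto
    have ii: "\<And>j. j \<in> {i, k} \<Longrightarrow> integrable M (T j)" using i1 i k by auto
    have "integrable M (\<lambda>\<omega>. \<Prod>j\<in>{i,k}. T j \<omega>)" by (rule indep_vars_integrable[OF _ ik ii]) simp
    moreover have "expectation (\<lambda>\<omega>. \<Prod>j\<in>{i,k}. T j \<omega>) = (\<Prod>j\<in>{i,k}. expectation (T j))"
      by (rule indep_vars_lebesgue_integral[OF _ ik ii]) simp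
    ultimately show ?thesis using False by simp
  qed
  define S where "S \<omega> = (\<Sum>i\<in>I. T i \<omega>)" for \<omega>
  have Ssq: "(S \<omega>)\<^sup>2 = (\<Sum>i\<in>I. \<Sum>k\<in>I. T i \<omega> * T k \<omega>)" for \<omega>
    unfolding S_def power2_eq_square by (rule sum_product)
  have iS: "integrable M S" unfolding S_def using i1 by auto
  have iS2: "integrable M (\<lambda>\<omega>. (S \<omega>)\<^sup>2)" unfolding Ssq using pr by auto
  have ES: "expectation S = (\<Sum>i\<in>I. expectation (T i))" unfolding S_def using i1 by (simp add: integral_sum)
  have ES2: "expectation (\<lambda>\<omega>. (S \<omega>)\<^sup>2) = (\<Sum>i\<in>I. \<Sum>k\<in>I. expectation (\<lambda>\<omega>. T i \<omega> * T k \<omega>))"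
  proof -
    have "expectation (\<lambda>\<omega>. (S \<omega>)\<^sup>2) = expectation (\<lambda>\<omega>. \<Sum>i\<in>I. \<Sum>k\<in>I. T i \<omega> * T k \<omega>)"
      by (simp only: Ssq)
    also have "\<dots> = (\<Sum>i\<in>I. expectation (\<lambda>\<omega>. \<Sum>k\<in>I. T i \<omega> * T k \<omega>))"
      by (rule Bochner_Integration.integral_sum) (use pr in auto)
    also have "\<dots> = (\<Sum>i\<in>I. \<Sum>k\<in>I. expectation (\<lambda>\<omega>. T i \<omega> * T k \<omega>))"
      by (intro sum.cong refl Bochner_Integration.integral_sum) (use pr in auto)
    finally show ?thesis .
  qed
  have "variance (\<lambda>\<omega>. c * S \<omega>) = c\<^sup>2 * variance S"
  proof -
    have "variance (\<lambda>\<omega>. c * S \<omega>) = expectation (\<lambda>\<omega>. c\<^sup>2 * (S \<omega> - expectation S)\<^sup>2)"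
      by (simp add: power2_eq_square algebra_simps)
    then show ?thesis by simp
  qed
  also have "variance S = expectation (\<lambda>\<omega>. (S \<omega>)\<^sup>2) - (expectation S)\<^sup>2"
    by (rule variance_eq[OF iS iS2])
  also have "\<dots> = (\<Sum>i\<in>I. \<Sum>k\<in>I. expectation (\<lambda>\<omega>. T i \<omega> * T k \<omega>) - expectation (T i) * expectation (T k))"
    unfolding ES2 ES by (simp add: power2_eq_square sum_product sum_subtractf)
  also have "\<dots> = (\<Sum>i\<in>I. \<Sum>k\<in>I. if i = k then expectation (\<lambda>\<omega>. (T i \<omega>)\<^sup>2) - (expectation (T i))\<^sup>2 else 0)"
    using pr by (intro sum.cong refl) simp
  also have "\<dots> = (\<Sum>i\<in>I. expectation (\<lambda>\<omega>. (T i \<omega>)\<^sup>2) - (expectation (T i))\<^sup>2)"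
    using fin by (simp add: sum.delta)
  finally show ?thesis unfolding S_def .
qed

theorem corollary2:
  fixes M :: "'w measure"
    and n :: nat
    and Xset :: "(real^'p) set"
    and act :: "'d::finite \<Rightarrow> real"
    and X :: "nat \<Rightarrow> 'w \<Rightarrow> real^'p"
    and A :: "nat \<Rightarrow> 'w \<Rightarrow> 'd"
    and R :: "nat \<Rightarrow> 'w \<Rightarrow> real"
    and pit :: "nat \<Rightarrow> 'd \<Rightarrow> real^'p \<Rightarrow> real"
    and kap :: "real^'p \<Rightarrow> 'd \<Rightarrow> real measure"
    and fv :: "real \<Rightarrow> real^'m"
    and c0 :: 'm
    and beta :: "real^'p \<Rightarrow> real^'m"
    and pol :: "real^'p \<Rightarrow> 'd"
  assumes P: "prob_space M"
    and n_pos: "n \<ge> 1"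
    and act_inj: "inj act"
    and meas_X: "\<And>i. i \<in> {1..n} \<Longrightarrow> X i \<in> M \<rightarrow>\<^sub>M borel"
    and meas_A: "\<And>i. i \<in> {1..n} \<Longrightarrow> A i \<in> M \<rightarrow>\<^sub>M count_space UNIV"
    and meas_R: "\<And>i. i \<in> {1..n} \<Longrightarrow> R i \<in> M \<rightarrow>\<^sub>M borel"
    and X_in: "\<And>i \<omega>. i \<in> {1..n} \<Longrightarrow> \<omega> \<in> space M \<Longrightarrow> X i \<omega> \<in> Xset"
    \<comment> \<open>(i) the tuples are independent\<close>
    and indep: "prob_space.indep_vars M
                  (\<lambda>_. borel \<Otimes>\<^sub>M (count_space UNIV \<Otimes>\<^sub>M borel))
                  (\<lambda>i \<omega>. (X i \<omega>, A i \<omega>, R i \<omega>)) {1..n}"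
    \<comment> \<open>(ii) X_1..X_n i.i.d. (independence follows from (i))\<close>
    and X_ident: "\<And>i. i \<in> {1..n} \<Longrightarrow> distr M borel (X i) = distr M borel (X 1)"
    \<comment> \<open>(iii) conditional law of A_i given X_i is pit i (.|X_i), with positive probabilities\<close>
    and pit_meas: "\<And>i k. i \<in> {1..n} \<Longrightarrow> pit i k \<in> borel_measurable borel"
    and pit_pos: "\<And>i k x. i \<in> {1..n} \<Longrightarrow> pit i k x > 0"
    and pit_sum: "\<And>i x. i \<in> {1..n} \<Longrightarrow> (\<Sum>k\<in>UNIV. pit i k x) = 1"
    and A_cond: "\<And>i k B. i \<in> {1..n} \<Longrightarrow> B \<in> sets borel \<Longrightarrow>
                   measure M {\<omega> \<in> space M. X i \<omega> \<in> B \<and> A i \<omega> = k}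
                   = (\<integral>\<omega>. indicator B (X i \<omega>) * pit i k (X i \<omega>) \<partial>M)"
    \<comment> \<open>(iv) conditional law of R_i given (X_i, A_i) is a common kernel kap\<close>
    and kap_meas: "\<And>k. (\<lambda>x. kap x k) \<in> borel \<rightarrow>\<^sub>M prob_algebra borel"
    and R_cond: "\<And>i k B C. i \<in> {1..n} \<Longrightarrow> B \<in> sets borel \<Longrightarrow> C \<in> sets borel \<Longrightarrow>
                   measure M {\<omega> \<in> space M. X i \<omega> \<in> B \<and> A i \<omega> = k \<and> R i \<omega> \<in> C}
                   = (\<integral>\<omega>. indicator {\<omega>. X i \<omega> \<in> B \<and> A i \<omega> = k} \<omega>
                          * measure (kap (X i \<omega>) k) C \<partial>M)"
    \<comment> \<open>finite second moments of rewards\<close>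
    and R_sq: "\<And>i. i \<in> {1..n} \<Longrightarrow> integrable M (\<lambda>\<omega>. (R i \<omega>)\<^sup>2)"
    \<comment> \<open>finite second moments of the IPS weights (so that Sigma_i is defined)\<close>
    and Y_sq: "\<And>i j. i \<in> {1..n} \<Longrightarrow>
                 integrable M (\<lambda>\<omega>. (ips_weight pit X A R i j \<omega>)\<^sup>2)"
    \<comment> \<open>f(a) = (1, f_1(a), ..., f_q(a)): coordinate c0 is the intercept\<close>
    and intercept: "\<And>a. fv a $ c0 = 1"
    and full_rank: "rank (design act fv) = CARD('m)"
    \<comment> \<open>regression assumption, rho(x,a) = E[R | X = x, A = a] = mean of kap x a\<close>
    and regression: "\<And>x k. x \<in> Xset \<Longrightarrow> (\<integral>r. r \<partial>kap x k) = fv (act k) \<bullet> beta x"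
    \<comment> \<open>Sigma_i(X_i) invertible\<close>
    and Sigma_inv: "\<And>i. i \<in> {1..n} \<Longrightarrow>
                 AE \<omega> in M. invertible (cond_cov_matrix M borel pit X A R i \<omega>)"
    \<comment> \<open>deterministic (measurable) policy\<close>
    and pol_meas: "pol \<in> borel \<rightarrow>\<^sub>M count_space UNIV"
  shows "prob_space.variance M (V_K M borel n pit X A R (design act fv) pol)
         \<le> prob_space.variance M (V_IPS n pit X A R pol)"
proof -
  interpret P: prob_space M by (rule P)
  define D where "D = design act fv"
  define TK where "TK i \<omega> = R i \<omega> * (axis (A i \<omega>) 1 \<bullet> (kernel_matrix (cond_cov_matrix M borel pit X A R i \<omega>) D *v axis (pol (X i \<omega>)) 1)) / pit i (A i \<omega>) (X i \<omega>)" for i \<omega>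
  define TI where "TI i \<omega> = R i \<omega> * (if A i \<omega> = pol (X i \<omega>) then 1 else 0) / pit i (A i \<omega>) (X i \<omega>)" for i \<omega>
  define Z where "Z i \<omega> = (X i \<omega>, A i \<omega>, R i \<omega>)" for i \<omega>
  define N where "N = (borel \<Otimes>\<^sub>M (count_space UNIV \<Otimes>\<^sub>M borel) :: ((real^'p) \<times> 'd \<times> real) measure)"
  have per: "integrable M (\<lambda>\<omega>. (TK i \<omega>)\<^sup>2) \<and> integrable M (\<lambda>\<omega>. (TI i \<omega>)\<^sup>2)
      \<and> (\<integral>\<omega>. TK i \<omega> \<partial>M) = (\<integral>\<omega>. TI i \<omega> \<partial>M)
      \<and> (\<integral>\<omega>. (TK i \<omega>)\<^sup>2 \<partial>M) \<le> (\<integral>\<omega>. (TI i \<omega>)\<^sup>2 \<partial>M)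
      \<and> TK i \<in> borel_measurable (vimage_algebra (space M) (Z i) N)
      \<and> TI i \<in> borel_measurable (vimage_algebra (space M) (Z i) N)"
    if i: "i \<in> {1..n}" for i
  proof -
    interpret S: single M "X i" "A i" "R i" "pit i" kap
    proof (unfold_locales)
      show "\<And>j. integrable M (\<lambda>\<omega>. (R i \<omega> * (if A i \<omega> = j then 1 else 0) / pit i j (X i \<omega>))\<^sup>2)"
        using Y_sq[OF i] unfolding ips_weight_def .
    qed (use P meas_X[OF i] meas_A[OF i] meas_R[OF i] pit_meas[OF i] pit_pos[OF i] pit_sum[OF i]
          A_cond[OF i] kap_meas R_cond[OF i] R_sq[OF i] in auto)
    have Yeq: "ips_weight pit X A R i j = S.Y j" for j
      by (simp add: fun_eq_iff ips_weight_def S.Y_def)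
    have Sig_eq: "cond_cov_matrix M borel pit X A R i = S.Sig"
      by (simp add: fun_eq_iff cond_cov_matrix_def S.Sig_def S.F_def Yeq Let_def)
    have reg: "AE \<omega> in M. S.rv \<omega> = D *v beta (X i \<omega>)"
      using S.rv_mean AE_space
    proof eventually_elim
      case (elim \<omega>)
      have xin: "X i \<omega> \<in> Xset" by (rule X_in[OF i elim(2)])
      show ?case
      proof (subst vec_eq_iff, intro allI)
        fix j
        have "S.rv \<omega> $ j = fv (act j) \<bullet> beta (X i \<omega>)"
          using elim(1) regression[OF xin] by simp
        also have "\<dots> = (D *v beta (X i \<omega>)) $ j"
          by (simp add: D_def design_def matrix_vector_mult_def inner_vec_def)
        finally show "S.rv \<omega> $ j = (D *v beta (X i \<omega>)) $ j" .
      qed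
    qed
    have Sinv: "AE \<omega> in M. invertible (S.Sig \<omega>)" using Sigma_inv[OF i] unfolding Sig_eq .
    have rk: "rank D = CARD('m)" using full_rank unfolding D_def .
    note pi = S.per_i[OF rk reg Sinv pol_meas]
    have TKe: "TK i = (\<lambda>\<omega>. R i \<omega> * (axis (A i \<omega>) 1 \<bullet> (kernel_matrix (S.Sig \<omega>) D *v axis (pol (X i \<omega>)) 1)) / pit i (A i \<omega>) (X i \<omega>))"
      unfolding TK_def Sig_eq by (rule ext) simp
    have TIe: "TI i = (\<lambda>\<omega>. R i \<omega> * (if A i \<omega> = pol (X i \<omega>) then 1 else 0) / pit i (A i \<omega>) (X i \<omega>))"
      unfolding TI_def by (rule ext) simp
    define G where "G = vimage_algebra (space M) (Z i) N"
    have ZG: "Z i \<in> G \<rightarrow>\<^sub>M N" unfolding G_def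
      by (rule measurable_vimage_algebra1) (simp add: N_def space_pair_measure)
    have sG: "space G = space M" unfolding G_def by simp
    have XG: "X i \<in> G \<rightarrow>\<^sub>M borel"
    proof -
      have "(\<lambda>x::(real^'p) \<times> 'd \<times> real. fst x) \<in> N \<rightarrow>\<^sub>M borel" unfolding N_def by measurable
      from measurable_compose[OF ZG this] show ?thesis unfolding Z_def by simp
    qed
    have AG: "A i \<in> G \<rightarrow>\<^sub>M count_space UNIV"
    proof -
      have "(\<lambda>x::(real^'p) \<times> 'd \<times> real. fst (snd x)) \<in> N \<rightarrow>\<^sub>M count_space UNIV" unfolding N_def by measurable
      from measurable_compose[OF ZG this] show ?thesis unfolding Z_def by simp
    qed
    have RG: "R i \<in> G \<rightarrow>\<^sub>M borel"
    proof -
      have "(\<lambda>x::(real^'p) \<times> 'd \<times> real. snd (snd x)) \<in> N \<rightarrow>\<^sub>M borel" unfolding N_def by measurable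
      from measurable_compose[OF ZG this] show ?thesis unfolding Z_def by simp
    qed
    note tg = S.TK_G(1)[where D=D, OF sG XG AG RG pol_meas] S.TK_G(2)[OF sG XG AG RG pol_meas]
    show ?thesis using pi tg unfolding TKe TIe G_def by simp
  qed
  have indZ: "P.indep_vars (\<lambda>_. N) Z {1..n}" using indep unfolding Z_def N_def .
  have indK: "P.indep_vars (\<lambda>_. borel) TK {1..n}"
    by (rule P.indep_from_tuple[OF indZ]) (use per in auto)
  have indI: "P.indep_vars (\<lambda>_. borel) TI {1..n}"
    by (rule P.indep_from_tuple[OF indZ]) (use per in auto)
  have VK: "V_K M borel n pit X A R (design act fv) pol = (\<lambda>\<omega>. (1 / real n) * (\<Sum>i\<in>{1..n}. TK i \<omega>))"
    by (simp add: fun_eq_iff V_K_def TK_def D_def)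
  have VI: "V_IPS n pit X A R pol = (\<lambda>\<omega>. (1 / real n) * (\<Sum>i\<in>{1..n}. TI i \<omega>))"
    by (simp add: fun_eq_iff V_IPS_def TI_def)
  have "prob_space.variance M (V_K M borel n pit X A R (design act fv) pol)
      = (1 / real n)\<^sup>2 * (\<Sum>i\<in>{1..n}. (\<integral>\<omega>. (TK i \<omega>)\<^sup>2 \<partial>M) - (\<integral>\<omega>. TK i \<omega> \<partial>M)\<^sup>2)"
    unfolding VK by (rule P.var_sum_indep[OF _ indK]) (use per in auto)
  also have "\<dots> \<le> (1 / real n)\<^sup>2 * (\<Sum>i\<in>{1..n}. (\<integral>\<omega>. (TI i \<omega>)\<^sup>2 \<partial>M) - (\<integral>\<omega>. TI i \<omega> \<partial>M)\<^sup>2)"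
    by (intro mult_left_mono sum_mono) (use per in auto)
  also have "\<dots> = prob_space.variance M (V_IPS n pit X A R pol)"
    unfolding VI by (rule P.var_sum_indep[OF _ indI, symmetric]) (use per in auto)
  finally show ?thesis .
qed

end
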